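(* For every word $x$ there exists at most one densely non-increasing sequence $(u_\beta)_{\beta<\alpha}$ of prime words such that $x=\prod_{\beta<\alpha}u_\beta$.
   Context: $A$ is a finite alphabet with a linear order $<_A$. Words are sequences of letters indexed by countable ordinals; $\prod$ is ordered concatenation and $x^\alpha$ the concatenation of $\alpha$ copies of $x$. A suffix of $x$ is $x[\gamma,|x|)$, proper if $0<\gamma<|x|$. Write $x<_{str}x'$ if there are letters $a<_Ab$ and words $y,z,z'$ with $x=yaz$, $x'=ybz'$; $x\le_{lex}x'$ iff $x$ is a prefix of $x'$ or $x<_{str}x'$. A word is primitive if $x=y^\alpha$ implies $\alpha=1$ and $y=x$; $w$ is prime if it is primitive and every proper suffix $z$ satisfies $w\le_{lex}z$. A sequence $(u_\beta)_{\beta<\alpha}$ of words is densely non-increasing if for all $\gamma<\gamma'\le\alpha$, either $u_\beta=u_\gamma$ for all $\gamma\le\beta<\gamma'$, or there exist $\gamma\le\beta<\beta'<\gamma'$ with $u_\beta>_{lex}u_{\beta'}$. *)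

theory Defs
  imports Main "HOL-Library.Countable_Set"
begin

text \<open>Transfinite words: a word is a pair (r, f) where r is a (reflexive) well-order
  relation on its field (the set of positions) and f assigns letters to positions.
  Words are considered equal up to letter-preserving order isomorphism.\<close>

type_synonym ('i,'a) wd = "'i rel \<times> ('i \<Rightarrow> 'a)"

definition wf_word :: "('i,'a) wd \<Rightarrow> bool" where
  "wf_word x \<longleftrightarrow> Well_order (fst x) \<and> countable (Field (fst x))"

definition weq :: "('i,'a) wd \<Rightarrow> ('j,'a) wd \<Rightarrow> bool" where
  "weq x y \<longleftrightarrow> (\<exists>h. bij_betw h (Field (fst x)) (Field (fst y))
     \<and> (\<forall>p\<in>Field (fst x). \<forall>q\<in>Field (fst x). (p,q) \<in> fst x \<longleftrightarrow> (h p, h q) \<in> fst y)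
     \<and> (\<forall>p\<in>Field (fst x). snd x p = snd y (h p)))"

definition cat :: "('i,'a) wd \<Rightarrow> ('j,'a) wd \<Rightarrow> ('i + 'j,'a) wd" where
  "cat x y = ({(Inl p, Inl q) | p q. (p,q) \<in> fst x}
            \<union> {(Inr p, Inr q) | p q. (p,q) \<in> fst y}
            \<union> {(Inl p, Inr q) | p q. p \<in> Field (fst x) \<and> q \<in> Field (fst y)},
            case_sum (snd x) (snd y))"

definition letter :: "'a \<Rightarrow> (nat,'a) wd" where
  "letter a = ({(0,0)}, \<lambda>_. a)"

definition wprod :: "'j rel \<Rightarrow> ('j \<Rightarrow> ('k,'a) wd) \<Rightarrow> ('j \<times> 'k,'a) wd" where
  "wprod s u = ({((b,p),(b',p')). b \<in> Field s \<and> b' \<in> Field s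
                  \<and> p \<in> Field (fst (u b)) \<and> p' \<in> Field (fst (u b'))
                  \<and> ((b \<noteq> b' \<and> (b,b') \<in> s) \<or> (b = b' \<and> (p,p') \<in> fst (u b)))},
                \<lambda>(b,p). snd (u b) p)"

definition lt_str :: "('i,'a::linorder) wd \<Rightarrow> ('j,'a) wd \<Rightarrow> bool" where
  "lt_str x x' \<longleftrightarrow> (\<exists>a b (y::(nat,'a) wd) (z::(nat,'a) wd) (z'::(nat,'a) wd).
      wf_word y \<and> wf_word z \<and> wf_word z' \<and> a < b
      \<and> weq x (cat y (cat (letter a) z)) \<and> weq x' (cat y (cat (letter b) z')))"

definition is_prefix :: "('i,'a) wd \<Rightarrow> ('j,'a) wd \<Rightarrow> bool" where
  "is_prefix x x' \<longleftrightarrow> (\<exists>z::(nat,'a) wd. wf_word z \<and> weq x' (cat x z))"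

definition le_lex :: "('i,'a::linorder) wd \<Rightarrow> ('j,'a) wd \<Rightarrow> bool" where
  "le_lex x x' \<longleftrightarrow> is_prefix x x' \<or> lt_str x x'"

definition lt_lex :: "('i,'a::linorder) wd \<Rightarrow> ('j,'a) wd \<Rightarrow> bool" where
  "lt_lex x x' \<longleftrightarrow> le_lex x x' \<and> \<not> weq x x'"

definition proper_suffix :: "('i,'a) wd \<Rightarrow> ('j,'a) wd \<Rightarrow> bool" where
  "proper_suffix z w \<longleftrightarrow> (\<exists>y::(nat,'a) wd. wf_word y \<and> Field (fst y) \<noteq> {}
      \<and> Field (fst z) \<noteq> {} \<and> weq w (cat y z))"

text \<open>x = y^alpha implies alpha = 1 and y = x (alpha a countable ordinal,
  represented as a well-order on a subset of nat).\<close>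
definition primitive :: "('i,'a) wd \<Rightarrow> bool" where
  "primitive x \<longleftrightarrow> (\<forall>(s::nat rel) (y::(nat,'a) wd).
      Well_order s \<and> wf_word y \<and> weq x (wprod s (\<lambda>_. y))
      \<longrightarrow> (\<exists>b. Field s = {b}) \<and> weq y x)"

definition prime_word :: "('i,'a::linorder) wd \<Rightarrow> bool" where
  "prime_word w \<longleftrightarrow> wf_word w \<and> primitive w
     \<and> (\<forall>z::(nat,'a) wd. wf_word z \<and> proper_suffix z w \<longrightarrow> le_lex w z)"

text \<open>Densely non-increasing: for all gamma < gamma' <= alpha (gamma' = None encodes alpha).\<close>
definition below_bound :: "'j rel \<Rightarrow> 'j option \<Rightarrow> 'j \<Rightarrow> bool" where
  "below_bound s g' b = (case g' of None \<Rightarrow> True | Some g \<Rightarrow> (b, g) \<in> s \<and> b \<noteq> g)"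

definition dense_nonincr :: "'j rel \<Rightarrow> ('j \<Rightarrow> ('k,'a::linorder) wd) \<Rightarrow> bool" where
  "dense_nonincr s u \<longleftrightarrow> (\<forall>g \<in> Field s. \<forall>g' :: 'j option.
      (case g' of None \<Rightarrow> True | Some h \<Rightarrow> h \<in> Field s \<and> (g, h) \<in> s \<and> g \<noteq> h) \<longrightarrow>
      ((\<forall>b \<in> Field s. (g, b) \<in> s \<and> below_bound s g' b \<longrightarrow> weq (u b) (u g))
       \<or> (\<exists>b \<in> Field s. \<exists>b' \<in> Field s. (g, b) \<in> s \<and> (b, b') \<in> s \<and> b \<noteq> b'
            \<and> below_bound s g' b' \<and> lt_lex (u b') (u b))))"

end

theory Submission
  imports Defs
begin


abbreviation fld :: "('i,'a) wd \<Rightarrow> 'i set" where "fld x \<equiv> Field (fst x)"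

definition isom :: "('i,'a) wd \<Rightarrow> ('j,'a) wd \<Rightarrow> ('i \<Rightarrow> 'j) \<Rightarrow> bool" where
 "isom x y h \<longleftrightarrow> bij_betw h (fld x) (fld y)
     \<and> (\<forall>p\<in>fld x. \<forall>q\<in>fld x. (p,q) \<in> fst x \<longleftrightarrow> (h p, h q) \<in> fst y)
     \<and> (\<forall>p\<in>fld x. snd x p = snd y (h p))"

lemma weq_isom: "weq x y \<longleftrightarrow> (\<exists>h. isom x y h)"
  unfolding weq_def isom_def by simp

lemma isom_id: "isom x x id" unfolding isom_def by (simp add: bij_betw_id)

lemma weq_refl: "weq x x" using isom_id weq_isom by blast

lemma isomD1: "isom x y h \<Longrightarrow> bij_betw h (fld x) (fld y)" unfolding isom_def by blast
lemma isomD2: "isom x y h \<Longrightarrow> p \<in> fld x \<Longrightarrow> q \<in> fld x \<Longrightarrow> (p,q) \<in> fst x \<longleftrightarrow> (h p, h q) \<in> fst y"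
  unfolding isom_def by blast
lemma isomD3: "isom x y h \<Longrightarrow> p \<in> fld x \<Longrightarrow> snd x p = snd y (h p)"
  unfolding isom_def by blast
lemma isom_in: "isom x y h \<Longrightarrow> p \<in> fld x \<Longrightarrow> h p \<in> fld y"
  using isomD1 bij_betwE by blast
lemma isomI: "bij_betw h (fld x) (fld y) \<Longrightarrow>
   (\<And>p q. p \<in> fld x \<Longrightarrow> q \<in> fld x \<Longrightarrow> (p,q) \<in> fst x \<longleftrightarrow> (h p, h q) \<in> fst y) \<Longrightarrow>
   (\<And>p. p \<in> fld x \<Longrightarrow> snd x p = snd y (h p)) \<Longrightarrow> isom x y h"
  unfolding isom_def by blast

lemma isom_inv: assumes "isom x y h" shows "isom y x (inv_into (fld x) h)"
proof -
  let ?g = "inv_into (fld x) h"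
  have b: "bij_betw h (fld x) (fld y)" using assms by (rule isomD1)
  have bg: "bij_betw ?g (fld y) (fld x)" using b by (rule bij_betw_inv_into)
  have hg: "\<And>q. q \<in> fld y \<Longrightarrow> h (?g q) = q" using b by (rule bij_betw_inv_into_right)
  have gin: "\<And>q. q \<in> fld y \<Longrightarrow> ?g q \<in> fld x" using bg bij_betwE by blast
  show ?thesis
  proof (rule isomI)
    show "bij_betw ?g (fld y) (fld x)" by (rule bg)
  next
    fix p q assume p: "p \<in> fld y" and q: "q \<in> fld y"
    have "(?g p, ?g q) \<in> fst x \<longleftrightarrow> (h (?g p), h (?g q)) \<in> fst y"
      using isomD2[OF assms gin[OF p] gin[OF q]] .
    then show "(p, q) \<in> fst y \<longleftrightarrow> (?g p, ?g q) \<in> fst x" using hg[OF p] hg[OF q] by simp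
  next
    fix p assume p: "p \<in> fld y"
    have "snd x (?g p) = snd y (h (?g p))" using isomD3[OF assms gin[OF p]] .
    then show "snd y p = snd x (?g p)" using hg[OF p] by simp
  qed
qed

lemma weq_sym: assumes "weq x y" shows "weq y x"
proof -
  obtain h where "isom x y h" using assms weq_isom by blast
  then have "isom y x (inv_into (fld x) h)" by (rule isom_inv)
  then show ?thesis using weq_isom by blast
qed

lemma isom_comp: assumes h: "isom x y h" and k: "isom y z k" shows "isom x z (k \<circ> h)"
proof (rule isomI)
  show "bij_betw (k \<circ> h) (fld x) (fld z)" using isomD1[OF h] isomD1[OF k] by (rule bij_betw_trans)
next
  fix p q assume p: "p \<in> fld x" and q: "q \<in> fld x"
  show "(p, q) \<in> fst x \<longleftrightarrow> ((k \<circ> h) p, (k \<circ> h) q) \<in> fst z"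
    using isomD2[OF h p q] isomD2[OF k isom_in[OF h p] isom_in[OF h q]] by simp
next
  fix p assume p: "p \<in> fld x"
  show "snd x p = snd z ((k \<circ> h) p)" using isomD3[OF h p] isomD3[OF k isom_in[OF h p]] by simp
qed

lemma weq_trans: assumes "weq x y" "weq y z" shows "weq x z"
proof -
  obtain h where h: "isom x y h" using assms weq_isom by blast
  obtain k where k: "isom y z k" using assms weq_isom by blast
  have "isom x z (k \<circ> h)" using h k by (rule isom_comp)
  then show ?thesis using weq_isom by blast
qed

lemma WO_refl: "Well_order r \<Longrightarrow> Refl r" using wo_rel.REFL wo_rel_def by blast

lemma WO_refl_pt: "Well_order r \<Longrightarrow> p \<in> Field r \<Longrightarrow> (p,p) \<in> r"
  using WO_refl refl_onD by fastforce

lemma WO_total: "Well_order r \<Longrightarrow> p \<in> Field r \<Longrightarrow> q \<in> Field r \<Longrightarrow> (p,q) \<in> r \<or> (q,p) \<in> r"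
  using WO_refl_pt by (metis wo_rel.TOTALS wo_rel_def)

lemma WO_antisym: "Well_order r \<Longrightarrow> (p,q) \<in> r \<Longrightarrow> (q,p) \<in> r \<Longrightarrow> p = q"
  by (metis wo_rel.ANTISYM wo_rel_def antisymD)

lemma WO_trans: "Well_order r \<Longrightarrow> (p,q) \<in> r \<Longrightarrow> (q,t) \<in> r \<Longrightarrow> (p,t) \<in> r"
  by (metis wo_rel.TRANS wo_rel_def transD)

lemma Field_Restr_refl: "Refl r \<Longrightarrow> A \<subseteq> Field r \<Longrightarrow> Field (Restr r A) = A"
  unfolding refl_on_def Field_def by blast

lemma Field_Restr_sub: "Field (Restr r A) \<subseteq> Field r \<inter> A"
  unfolding Field_def by blast

definition rs :: "('i,'a) wd \<Rightarrow> 'i set \<Rightarrow> ('i,'a) wd" where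
  "rs x A = (Restr (fst x) A, snd x)"

lemma fst_rs[simp]: "fst (rs x A) = Restr (fst x) A" and snd_rs[simp]: "snd (rs x A) = snd x"
  by (auto simp: rs_def)

lemma fld_rs: "Well_order (fst x) \<Longrightarrow> A \<subseteq> fld x \<Longrightarrow> fld (rs x A) = A"
  by (metis Field_Restr_refl WO_refl fst_rs)

lemma rs_rs: "rs (rs x A) B = rs x (A \<inter> B)" by (auto simp: rs_def)

lemma rs_fld[simp]: "rs x (fld x) = x" by (simp add: rs_def Restr_Field)

lemma WO_rs: "Well_order (fst x) \<Longrightarrow> Well_order (fst (rs x A))"
  by (simp add: Well_order_Restr)

lemma wf_rs: "wf_word x \<Longrightarrow> wf_word (rs x A)"
  unfolding wf_word_def using Well_order_Restr Field_Restr_sub countable_subset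
  by (metis fst_rs inf.boundedE)

lemma isom_rs: assumes "Well_order (fst x)" "Well_order (fst y)" "isom x y h" "A \<subseteq> fld x"
  shows "isom (rs x A) (rs y (h ` A)) h"
proof -
  have b: "bij_betw h (fld x) (fld y)" using assms(3) by (rule isomD1)
  have hA: "h ` A \<subseteq> fld y" using isom_in[OF assms(3)] assms(4) by blast
  have bA: "bij_betw h A (h ` A)" using b assms(4) bij_betw_subset by blast
  have f1: "fld (rs x A) = A" using fld_rs[OF assms(1) assms(4)] .
  have f2: "fld (rs y (h ` A)) = h ` A" using fld_rs[OF assms(2) hA] .
  show ?thesis
  proof (rule isomI)
    show "bij_betw h (fld (rs x A)) (fld (rs y (h ` A)))" using bA f1 f2 by simp
  next
    fix p q assume p: "p \<in> fld (rs x A)" and q: "q \<in> fld (rs x A)"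
    then have pA: "p \<in> A" and qA: "q \<in> A" using f1 by auto
    have "(p,q) \<in> fst x \<longleftrightarrow> (h p, h q) \<in> fst y" using isomD2[OF assms(3)] assms(4) pA qA by blast
    then show "(p, q) \<in> fst (rs x A) \<longleftrightarrow> (h p, h q) \<in> fst (rs y (h ` A))"
      using pA qA by auto
  next
    fix p assume p: "p \<in> fld (rs x A)"
    then have pA: "p \<in> A" using f1 by auto
    show "snd (rs x A) p = snd (rs y (h ` A)) (h p)" using isomD3[OF assms(3)] assms(4) pA by auto
  qed
qed

lemma fld_cat: "fld (cat y z) = Inl ` fld y \<union> Inr ` fld z"
  unfolding cat_def Field_def by force

lemma cat_rel: "((a,b) \<in> fst (cat y z)) \<longleftrightarrow>
  (\<exists>p q. a = Inl p \<and> b = Inl q \<and> (p,q) \<in> fst y) \<or>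
  (\<exists>p q. a = Inr p \<and> b = Inr q \<and> (p,q) \<in> fst z) \<or>
  (\<exists>p q. a = Inl p \<and> b = Inr q \<and> p \<in> fld y \<and> q \<in> fld z)"
  unfolding cat_def by auto


lemma snd_cat: "snd (cat y z) = case_sum (snd y) (snd z)" by (simp add: cat_def)

lemma ofilter_down: "ofilter r A \<Longrightarrow> a \<in> A \<Longrightarrow> (b,a) \<in> r \<Longrightarrow> b \<in> A"
  unfolding Order_Relation.ofilter_def under_def by blast

lemma ofilter_sub: "ofilter r A \<Longrightarrow> A \<subseteq> Field r"
  unfolding Order_Relation.ofilter_def by blast

lemma ofilterI: "A \<subseteq> Field r \<Longrightarrow> (\<And>a b. a \<in> A \<Longrightarrow> (b,a) \<in> r \<Longrightarrow> b \<in> A) \<Longrightarrow> ofilter r A"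
  unfolding Order_Relation.ofilter_def under_def by blast

lemma cat_form: assumes h: "isom x (cat y z) h" and d: "d \<in> fld x"
  shows "(\<exists>a\<in>fld y. h d = Inl a) \<or> (\<exists>b\<in>fld z. h d = Inr b)"
proof -
  have "h d \<in> Inl ` fld y \<union> Inr ` fld z" using isom_in[OF h d] by (simp add: fld_cat)
  then show ?thesis by blast
qed

lemma cat_decomp:
  assumes wo: "Well_order (fst x)" and h: "isom x (cat y z) h"
  shows "ofilter (fst x) {d \<in> fld x. isl (h d)}"
    and "isom (rs x {d \<in> fld x. isl (h d)}) y (projl \<circ> h)"
    and "isom (rs x (fld x - {d \<in> fld x. isl (h d)})) z (projr \<circ> h)"
proof -
  let ?A = "{d \<in> fld x. isl (h d)}"
  have b: "bij_betw h (fld x) (fld (cat y z))" using h by (rule isomD1)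
  have inj: "inj_on h (fld x)" using b bij_betw_def by blast
  have surj: "\<And>c. c \<in> fld (cat y z) \<Longrightarrow> \<exists>d\<in>fld x. h d = c"
  proof -
    fix c assume "c \<in> fld (cat y z)"
    then have "c \<in> h ` fld x" using b by (simp add: bij_betw_def)
    then show "\<exists>d\<in>fld x. h d = c" by blast
  qed
  show ofA: "ofilter (fst x) ?A"
  proof (rule ofilterI)
    show "?A \<subseteq> fld x" by blast
  next
    fix a c assume a: "a \<in> ?A" and ca: "(c,a) \<in> fst x"
    have cf: "c \<in> fld x" using ca by (simp add: FieldI1)
    have af: "a \<in> fld x" using a by simp
    have "(h c, h a) \<in> fst (cat y z)" using isomD2[OF h cf af] ca by blast
    then have "isl (h c)" using a unfolding cat_rel by auto
    then show "c \<in> ?A" using cf by blast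
  qed
  have sA: "?A \<subseteq> fld x" by blast
  have sB: "fld x - ?A \<subseteq> fld x" by blast
  have fA: "fld (rs x ?A) = ?A" using fld_rs[OF wo sA] .
  have fB: "fld (rs x (fld x - ?A)) = fld x - ?A" using fld_rs[OF wo sB] .
  have hl: "\<And>d. d \<in> ?A \<Longrightarrow> \<exists>a\<in>fld y. h d = Inl a"
  proof -
    fix d assume d: "d \<in> ?A"
    then have "(\<exists>a\<in>fld y. h d = Inl a) \<or> (\<exists>b\<in>fld z. h d = Inr b)" using cat_form[OF h] by blast
    then show "\<exists>a\<in>fld y. h d = Inl a" using d by auto
  qed
  have hr: "\<And>d. d \<in> fld x - ?A \<Longrightarrow> \<exists>a\<in>fld z. h d = Inr a"
  proof -
    fix d assume d: "d \<in> fld x - ?A"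
    then have "(\<exists>a\<in>fld y. h d = Inl a) \<or> (\<exists>b\<in>fld z. h d = Inr b)" using cat_form[OF h] by blast
    then show "\<exists>a\<in>fld z. h d = Inr a" using d by auto
  qed
  show "isom (rs x ?A) y (projl \<circ> h)"
  proof (rule isomI)
    show "bij_betw (projl \<circ> h) (fld (rs x ?A)) (fld y)"
      unfolding fA bij_betw_def
    proof
      show "inj_on (projl \<circ> h) ?A"
      proof (rule inj_onI)
        fix d1 d2 assume d1: "d1 \<in> ?A" and d2: "d2 \<in> ?A" and e: "(projl \<circ> h) d1 = (projl \<circ> h) d2"
        obtain a1 where a1: "h d1 = Inl a1" using hl[OF d1] by blast
        obtain a2 where a2: "h d2 = Inl a2" using hl[OF d2] by blast
        have "h d1 = h d2" using e by (simp add: a1 a2)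
        moreover have "d1 \<in> fld x" "d2 \<in> fld x" using d1 d2 by auto
        ultimately show "d1 = d2" by (rule inj_onD[OF inj])
      qed
    next
      show "(projl \<circ> h) ` ?A = fld y"
      proof
        show "(projl \<circ> h) ` ?A \<subseteq> fld y"
        proof
          fix p assume "p \<in> (projl \<circ> h) ` ?A"
          then obtain d where d: "d \<in> ?A" "p = projl (h d)" by auto
          obtain a1 where "a1 \<in> fld y" "h d = Inl a1" using hl[OF d(1)] by blast
          then show "p \<in> fld y" using d by simp
        qed
      next
        show "fld y \<subseteq> (projl \<circ> h) ` ?A"
        proof
          fix p assume p: "p \<in> fld y"
          then have "Inl p \<in> fld (cat y z)" using fld_cat by blast
          then obtain d where d: "d \<in> fld x" "h d = Inl p" using surj by blast
          then have "d \<in> ?A" by simp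
          moreover have "p = (projl \<circ> h) d" using d by simp
          ultimately show "p \<in> (projl \<circ> h) ` ?A" by blast
        qed
      qed
    qed
  next
    fix p q assume p: "p \<in> fld (rs x ?A)" and q: "q \<in> fld (rs x ?A)"
    then have pA: "p \<in> ?A" and qA: "q \<in> ?A" using fA by auto
    obtain a1 where a1: "h p = Inl a1" using hl[OF pA] by blast
    obtain b1 where b1: "h q = Inl b1" using hl[OF qA] by blast
    have "(p,q) \<in> fst x \<longleftrightarrow> (h p, h q) \<in> fst (cat y z)" using isomD2[OF h] pA qA by blast
    also have "\<dots> \<longleftrightarrow> (projl (h p), projl (h q)) \<in> fst y"
      unfolding a1 b1 cat_rel by simp
    finally show "(p, q) \<in> fst (rs x ?A) \<longleftrightarrow> ((projl \<circ> h) p, (projl \<circ> h) q) \<in> fst y"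
      using pA qA by auto
  next
    fix p assume p: "p \<in> fld (rs x ?A)"
    then have pA: "p \<in> ?A" using fA by auto
    have "snd x p = snd (cat y z) (h p)" using isomD3[OF h] pA by blast
    moreover obtain a1 where a1: "h p = Inl a1" using hl[OF pA] by blast
    ultimately show "snd (rs x ?A) p = snd y ((projl \<circ> h) p)" by (simp add: snd_cat)
  qed
  show "isom (rs x (fld x - ?A)) z (projr \<circ> h)"
  proof (rule isomI)
    show "bij_betw (projr \<circ> h) (fld (rs x (fld x - ?A))) (fld z)"
      unfolding fB bij_betw_def
    proof
      show "inj_on (projr \<circ> h) (fld x - ?A)"
      proof (rule inj_onI)
        fix d1 d2 assume d1: "d1 \<in> fld x - ?A" and d2: "d2 \<in> fld x - ?A" and e: "(projr \<circ> h) d1 = (projr \<circ> h) d2"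
        obtain a1 where a1: "h d1 = Inr a1" using hr[OF d1] by blast
        obtain a2 where a2: "h d2 = Inr a2" using hr[OF d2] by blast
        have "h d1 = h d2" using e by (simp add: a1 a2)
        moreover have "d1 \<in> fld x" "d2 \<in> fld x" using d1 d2 by auto
        ultimately show "d1 = d2" by (rule inj_onD[OF inj])
      qed
    next
      show "(projr \<circ> h) ` (fld x - ?A) = fld z"
      proof
        show "(projr \<circ> h) ` (fld x - ?A) \<subseteq> fld z"
        proof
          fix p assume "p \<in> (projr \<circ> h) ` (fld x - ?A)"
          then obtain d where d: "d \<in> fld x - ?A" "p = projr (h d)" by auto
          obtain a1 where "a1 \<in> fld z" "h d = Inr a1" using hr[OF d(1)] by blast
          then show "p \<in> fld z" using d by simp
        qed
      next
        show "fld z \<subseteq> (projr \<circ> h) ` (fld x - ?A)"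
        proof
          fix p assume p: "p \<in> fld z"
          then have "Inr p \<in> fld (cat y z)" using fld_cat by blast
          then obtain d where d: "d \<in> fld x" "h d = Inr p" using surj by blast
          then have "d \<in> fld x - ?A" by simp
          moreover have "p = (projr \<circ> h) d" using d by simp
          ultimately show "p \<in> (projr \<circ> h) ` (fld x - ?A)" by blast
        qed
      qed
    qed
  next
    fix p q assume p: "p \<in> fld (rs x (fld x - ?A))" and q: "q \<in> fld (rs x (fld x - ?A))"
    then have pA: "p \<in> fld x - ?A" and qA: "q \<in> fld x - ?A" using fB by auto
    obtain a1 where a1: "h p = Inr a1" using hr[OF pA] by blast
    obtain b1 where b1: "h q = Inr b1" using hr[OF qA] by blast
    have "(p,q) \<in> fst x \<longleftrightarrow> (h p, h q) \<in> fst (cat y z)" using isomD2[OF h] pA qA by blast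
    also have "\<dots> \<longleftrightarrow> (projr (h p), projr (h q)) \<in> fst z"
      unfolding a1 b1 cat_rel by simp
    finally show "(p, q) \<in> fst (rs x (fld x - ?A)) \<longleftrightarrow> ((projr \<circ> h) p, (projr \<circ> h) q) \<in> fst z"
      using pA qA by auto
  next
    fix p assume p: "p \<in> fld (rs x (fld x - ?A))"
    then have pA: "p \<in> fld x - ?A" using fB by auto
    have "snd x p = snd (cat y z) (h p)" using isomD3[OF h] pA by blast
    moreover obtain a1 where a1: "h p = Inr a1" using hr[OF pA] by blast
    ultimately show "snd (rs x (fld x - ?A)) p = snd z ((projr \<circ> h) p)" by (simp add: snd_cat)
  qed
qed

lemma cat_compose:
  assumes wo: "Well_order (fst x)" and A: "ofilter (fst x) A"
    and g1: "isom (rs x A) y g1" and g2: "isom (rs x (fld x - A)) z g2"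
  shows "isom x (cat y z) (\<lambda>d. if d \<in> A then Inl (g1 d) else Inr (g2 d))"
proof -
  let ?h = "\<lambda>d. if d \<in> A then Inl (g1 d) else Inr (g2 d)"
  have Asub: "A \<subseteq> fld x" using A by (rule ofilter_sub)
  have fA: "fld (rs x A) = A" using fld_rs[OF wo Asub] .
  have fB: "fld (rs x (fld x - A)) = fld x - A" using fld_rs[OF wo, of "fld x - A"] by simp
  have b1: "bij_betw g1 A (fld y)" using isomD1[OF g1] fA by simp
  have b2: "bij_betw g2 (fld x - A) (fld z)" using isomD1[OF g2] fB by simp
  have b1': "bij_betw ?h A (Inl ` fld y)"
  proof -
    have "bij_betw Inl (fld y) (Inl ` fld y)" by (rule bij_betw_imageI) (auto simp: inj_on_def)
    then have "bij_betw (Inl \<circ> g1) A (Inl ` fld y)" using b1 by (rule bij_betw_trans[rotated])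
    then show ?thesis by (rule bij_betw_cong[THEN iffD1, rotated]) simp
  qed
  have b2': "bij_betw ?h (fld x - A) (Inr ` fld z)"
  proof -
    have "bij_betw Inr (fld z) (Inr ` fld z)" by (rule bij_betw_imageI) (auto simp: inj_on_def)
    then have "bij_betw (Inr \<circ> g2) (fld x - A) (Inr ` fld z)" using b2 by (rule bij_betw_trans[rotated])
    then show ?thesis by (rule bij_betw_cong[THEN iffD1, rotated]) simp
  qed
  have b: "bij_betw ?h (A \<union> (fld x - A)) (Inl ` fld y \<union> Inr ` fld z)"
    using bij_betw_combine[OF b1' b2'] by blast
  have g1in: "\<And>p. p \<in> A \<Longrightarrow> g1 p \<in> fld y" using b1 bij_betwE by blast
  have g2in: "\<And>p. p \<in> fld x - A \<Longrightarrow> g2 p \<in> fld z" using b2 bij_betwE by blast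
  show ?thesis
  proof (rule isomI)
    have "A \<union> (fld x - A) = fld x" using Asub by blast
    then show "bij_betw ?h (fld x) (fld (cat y z))" using b by (simp add: fld_cat)
  next
    fix p q assume p: "p \<in> fld x" and q: "q \<in> fld x"
    show "(p, q) \<in> fst x \<longleftrightarrow> (?h p, ?h q) \<in> fst (cat y z)"
    proof (cases "p \<in> A"; cases "q \<in> A")
      assume pA: "p \<in> A" and qA: "q \<in> A"
      have "(p,q) \<in> fst (rs x A) \<longleftrightarrow> (g1 p, g1 q) \<in> fst y" using isomD2[OF g1] pA qA fA by blast
      then show ?thesis using pA qA by (simp add: cat_rel)
    next
      assume pA: "p \<in> A" and qA: "q \<notin> A"
      have "(p,q) \<in> fst x"
      proof -
        have "(p,q) \<in> fst x \<or> (q,p) \<in> fst x" using WO_total[OF wo p q] .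
        then show ?thesis using ofilter_down[OF A pA] qA by blast
      qed
      then show ?thesis using pA qA g1in[OF pA] g2in q by (simp add: cat_rel)
    next
      assume pA: "p \<notin> A" and qA: "q \<in> A"
      have "(p,q) \<notin> fst x" using ofilter_down[OF A qA] pA by blast
      then show ?thesis using pA qA by (simp add: cat_rel)
    next
      assume pA: "p \<notin> A" and qA: "q \<notin> A"
      have "(p,q) \<in> fst (rs x (fld x - A)) \<longleftrightarrow> (g2 p, g2 q) \<in> fst z" using isomD2[OF g2] pA qA p q fB by blast
      then show ?thesis using pA qA p q by (simp add: cat_rel)
    qed
  next
    fix p assume p: "p \<in> fld x"
    show "snd x p = snd (cat y z) (?h p)"
    proof (cases "p \<in> A")
      case True
      then show ?thesis using isomD3[OF g1] fA by (simp add: snd_cat)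
    next
      case False
      then show ?thesis using isomD3[OF g2] fB p by (simp add: snd_cat)
    qed
  qed
qed

lemma fld_letter: "fld (letter a) = {0}" unfolding letter_def by (simp add: Field_def)

lemma isom_letterD: assumes h: "isom w (letter a) h" shows "\<exists>p. fld w = {p} \<and> snd w p = a"
proof -
  have b: "bij_betw h (fld w) {0}" using isomD1[OF h] fld_letter by metis
  then have "0 \<in> h ` fld w" by (simp add: bij_betw_def)
  then obtain p where p: "p \<in> fld w" "h p = 0" by (metis imageE)
  have "fld w = {p}"
  proof
    show "fld w \<subseteq> {p}"
    proof
      fix q assume q: "q \<in> fld w"
      then have "h q = 0" using b bij_betwE by blast
      then have "h q = h p" using p by simp
      then show "q \<in> {p}" using b p q by (simp add: bij_betw_def inj_on_def)
    qed
  qed (use p in blast)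
  moreover have "snd w p = a" using isomD3[OF h p(1)] by (simp add: letter_def)
  ultimately show ?thesis by blast
qed

lemma isom_letterI: assumes wo: "Well_order (fst w)" and f: "fld w = {p}"
  shows "isom w (letter (snd w p)) (\<lambda>_. 0)"
proof (rule isomI)
  have "fld (letter (snd w p)) = {0}" by (rule fld_letter)
  then show "bij_betw (\<lambda>_. 0) (fld w) (fld (letter (snd w p)))" using f
    by (simp add: bij_betw_def)
next
  fix p1 q1 assume "p1 \<in> fld w" "q1 \<in> fld w"
  then have "p1 = p" "q1 = p" using f by auto
  moreover have "(p,p) \<in> fst w" using WO_refl_pt[OF wo] f by blast
  ultimately show "(p1, q1) \<in> fst w \<longleftrightarrow> (0::nat, 0::nat) \<in> fst (letter (snd w p))"
    by (simp add: letter_def)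
next
  fix p1 assume "p1 \<in> fld w"
  then show "snd w p1 = snd (letter (snd w p)) 0" using f by (simp add: letter_def)
qed


definition pre :: "('i,'a) wd \<Rightarrow> ('j,'a) wd \<Rightarrow> bool" where
  "pre x y \<longleftrightarrow> (\<exists>B. ofilter (fst y) B \<and> weq x (rs y B))"

definition minc :: "'i rel \<Rightarrow> 'i set \<Rightarrow> 'i \<Rightarrow> bool" where
  "minc r A a \<longleftrightarrow> a \<in> Field r \<and> a \<notin> A \<and> (\<forall>c\<in>Field r. c \<notin> A \<longrightarrow> (a,c) \<in> r)"

definition strl :: "('i,'a::linorder) wd \<Rightarrow> ('j,'a) wd \<Rightarrow> bool" where
  "strl x y \<longleftrightarrow> (\<exists>A B a b. ofilter (fst x) A \<and> ofilter (fst y) B \<and> weq (rs x A) (rs y B)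
        \<and> minc (fst x) A a \<and> minc (fst y) B b \<and> snd x a < snd y b)"

lemma is_prefix_pre: fixes x :: "('i,'a) wd" and y :: "('j,'a) wd" assumes wo: "Well_order (fst y)" and ip: "is_prefix x y" shows "pre x y"
proof -
  obtain z :: "(nat,'a) wd" where "wf_word z" "weq y (cat x z)" using ip unfolding is_prefix_def by blast
  then obtain h where h: "isom y (cat x z) h" using weq_isom by blast
  define B where "B = {d \<in> fld y. isl (h d)}"
  have "ofilter (fst y) B" using cat_decomp(1)[OF wo h] B_def by simp
  moreover have "isom (rs y B) x (projl \<circ> h)" using cat_decomp(2)[OF wo h] B_def by simp
  then have "weq x (rs y B)" using weq_isom weq_sym by blast
  ultimately show ?thesis unfolding pre_def by blast
qed

lemma pre_is_prefix: fixes x :: "('i,'a) wd" and y :: "(nat,'a) wd" assumes wf: "wf_word y" and p: "pre x y" shows "is_prefix x y"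
proof -
  have wo: "Well_order (fst y)" using wf unfolding wf_word_def by blast
  obtain B where B: "ofilter (fst y) B" "weq x (rs y B)" using p unfolding pre_def by blast
  obtain g where g: "isom (rs y B) x g" using B(2) weq_sym weq_isom by blast
  have "isom (rs y (fld y - B)) (rs y (fld y - B)) id" by (rule isom_id)
  from cat_compose[OF wo B(1) g this]
  have "weq y (cat x (rs y (fld y - B)))" using weq_isom by blast
  moreover have "wf_word (rs y (fld y - B))" using wf_rs wf by blast
  ultimately show ?thesis unfolding is_prefix_def by blast
qed

lemma first_letter:
  assumes wo: "Well_order (fst x)" and e: "weq x (cat y0 (cat (letter c) z))"
  shows "\<exists>A a. ofilter (fst x) A \<and> weq (rs x A) y0 \<and> minc (fst x) A a \<and> snd x a = c"
proof -
  obtain h where h: "isom x (cat y0 (cat (letter c) z)) h" using e weq_isom by blast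
  define A where "A = {d \<in> fld x. isl (h d)}"
  have A: "ofilter (fst x) A" using cat_decomp(1)[OF wo h] A_def by simp
  have i1: "isom (rs x A) y0 (projl \<circ> h)" using cat_decomp(2)[OF wo h] A_def by simp
  define x2 where "x2 = rs x (fld x - A)"
  have i2: "isom x2 (cat (letter c) z) (projr \<circ> h)" using cat_decomp(3)[OF wo h] A_def x2_def by simp
  have wo2: "Well_order (fst x2)" using WO_rs[OF wo] x2_def by simp
  have fx2: "fld x2 = fld x - A" unfolding x2_def using fld_rs[OF wo, of "fld x - A"] by simp
  define A2 where "A2 = {d \<in> fld x2. isl ((projr \<circ> h) d)}"
  have A2: "ofilter (fst x2) A2" using cat_decomp(1)[OF wo2 i2] A2_def by simp
  have i3: "isom (rs x2 A2) (letter c) (projl \<circ> (projr \<circ> h))" using cat_decomp(2)[OF wo2 i2] A2_def by simp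
  obtain p where p: "fld (rs x2 A2) = {p}" "snd (rs x2 A2) p = c" using isom_letterD[OF i3] by blast
  have A2sub: "A2 \<subseteq> fld x2" using A2 ofilter_sub by blast
  have "fld (rs x2 A2) = A2" using fld_rs[OF wo2 A2sub] .
  then have A2p: "A2 = {p}" using p by simp
  have pin: "p \<in> fld x" "p \<notin> A" using A2p A2sub fx2 by auto
  have mi: "minc (fst x) A p"
    unfolding minc_def
  proof (intro conjI ballI impI)
    show "p \<in> fld x" "p \<notin> A" using pin by auto
  next
    fix c' assume c': "c' \<in> fld x" "c' \<notin> A"
    show "(p, c') \<in> fst x"
    proof (cases "c' = p")
      case True then show ?thesis using WO_refl_pt[OF wo] pin by simp
    next
      case False
      have "(p,c') \<in> fst x \<or> (c',p) \<in> fst x" using WO_total[OF wo pin(1) c'(1)] .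
      moreover have "(c',p) \<notin> fst x"
      proof
        assume "(c',p) \<in> fst x"
        then have "(c',p) \<in> fst x2" using x2_def c' pin by auto
        then have "c' \<in> A2" using ofilter_down[OF A2] A2p by blast
        then show False using A2p False by simp
      qed
      ultimately show ?thesis by blast
    qed
  qed
  have "snd x p = c" using p x2_def by simp
  moreover have "weq (rs x A) y0" using i1 weq_isom by blast
  ultimately show ?thesis using A mi by blast
qed

lemma lt_str_strl: fixes x :: "('i,'a::linorder) wd" and y :: "('j,'a) wd"
  assumes wox: "Well_order (fst x)" and woy: "Well_order (fst y)" and l: "lt_str x y" shows "strl x y"
proof -
  obtain a b and y0 z z' :: "(nat,'a) wd" where ab: "a < b" "weq x (cat y0 (cat (letter a) z))"
     "weq y (cat y0 (cat (letter b) z'))" using l unfolding lt_str_def by blast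
  obtain A p where A: "ofilter (fst x) A" "weq (rs x A) y0" "minc (fst x) A p" "snd x p = a"
    using first_letter[OF wox ab(2)] by blast
  obtain B q where B: "ofilter (fst y) B" "weq (rs y B) y0" "minc (fst y) B q" "snd y q = b"
    using first_letter[OF woy ab(3)] by blast
  have "weq (rs x A) (rs y B)" using A(2) B(2) weq_sym weq_trans by blast
  then show ?thesis unfolding strl_def using A B ab(1) by auto
qed

lemma build_letter:
  assumes wo: "Well_order (fst x)" and A: "ofilter (fst x) A" and m: "minc (fst x) A a"
    and g: "isom (rs x A) y0 g"
  shows "weq x (cat y0 (cat (letter (snd x a)) (rs x (fld x - A - {a}))))"
proof -
  define x2 where "x2 = rs x (fld x - A)"
  have Asub: "A \<subseteq> fld x" using A ofilter_sub by blast
  have wo2: "Well_order (fst x2)" unfolding x2_def using WO_rs[OF wo] .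
  have fx2: "fld x2 = fld x - A" unfolding x2_def using fld_rs[OF wo, of "fld x - A"] by simp
  have ain: "a \<in> fld x" "a \<notin> A" using m by (auto simp: minc_def)
  have of2: "ofilter (fst x2) {a}"
  proof (rule ofilterI)
    show "{a} \<subseteq> fld x2" using fx2 ain by simp
  next
    fix a' b assume a': "a' \<in> {a}" and ba: "(b,a') \<in> fst x2"
    then have ba': "(b,a) \<in> fst x" "b \<in> fld x" "b \<notin> A" using x2_def by auto
    then have "(a,b) \<in> fst x" using m ba' by (auto simp: minc_def)
    then show "b \<in> {a}" using WO_antisym[OF wo] ba'(1) by blast
  qed
  have e1: "rs x2 {a} = rs x {a}" unfolding x2_def rs_rs using ain by (simp add: Int_absorb1)
  have f1: "fld (rs x {a}) = {a}" by (rule fld_rs[OF wo]) (use ain in simp)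
  have i1: "isom (rs x2 {a}) (letter (snd x a)) (\<lambda>_. 0)" using isom_letterI[OF WO_rs[OF wo] f1] e1 by simp
  have e2: "rs x2 (fld x2 - {a}) = rs x (fld x - A - {a})" unfolding x2_def rs_rs fx2[unfolded x2_def]
    by (metis Diff_subset inf.absorb_iff2)
  have i2: "isom (rs x2 (fld x2 - {a})) (rs x (fld x - A - {a})) id" using e2 isom_id by metis
  from cat_compose[OF wo2 of2 i1 i2]
  have i3: "\<exists>k. isom (rs x (fld x - A)) (cat (letter (snd x a)) (rs x (fld x - A - {a}))) k"
    unfolding x2_def by blast
  then obtain k where k: "isom (rs x (fld x - A)) (cat (letter (snd x a)) (rs x (fld x - A - {a}))) k" by blast
  from cat_compose[OF wo A g k] show ?thesis using weq_isom by blast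
qed

lemma strl_lt_str: fixes x y :: "(nat,'a::linorder) wd"
  assumes wfx: "wf_word x" and wfy: "wf_word y" and s: "strl x y" shows "lt_str x y"
proof -
  have wox: "Well_order (fst x)" using wfx unfolding wf_word_def by blast
  have woy: "Well_order (fst y)" using wfy unfolding wf_word_def by blast
  obtain A B a b where AB: "ofilter (fst x) A" "ofilter (fst y) B" "weq (rs x A) (rs y B)"
      "minc (fst x) A a" "minc (fst y) B b" "snd x a < snd y b" using s unfolding strl_def by blast
  have i1: "isom (rs x A) (rs x A) id" by (rule isom_id)
  obtain g where g: "isom (rs y B) (rs x A) g" using AB(3) weq_sym weq_isom by blast
  have e1: "weq x (cat (rs x A) (cat (letter (snd x a)) (rs x (fld x - A - {a}))))"
    using build_letter[OF wox AB(1) AB(4) i1] .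
  have e2: "weq y (cat (rs x A) (cat (letter (snd y b)) (rs y (fld y - B - {b}))))"
    using build_letter[OF woy AB(2) AB(5) g] .
  have w1: "wf_word (rs x A)" "wf_word (rs x (fld x - A - {a}))" "wf_word (rs y (fld y - B - {b}))"
    using wf_rs wfx wfy by blast+
  show ?thesis unfolding lt_str_def using e1 e2 AB(6) w1 by blast
qed

lemma le_lex_iff: fixes x y :: "(nat,'a::linorder) wd"
  assumes "wf_word x" "wf_word y" shows "le_lex x y \<longleftrightarrow> pre x y \<or> strl x y"
  using assms is_prefix_pre pre_is_prefix lt_str_strl strl_lt_str le_lex_def wf_word_def by metis


lemma fld_rsA: "Well_order (fst x) \<Longrightarrow> ofilter (fst x) A \<Longrightarrow> fld (rs x A) = A"
  using fld_rs ofilter_sub by blast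

lemma ofilter_fld: "Well_order (fst x) \<Longrightarrow> ofilter (fst x) (fld x)"
  by (rule ofilterI) (auto intro: FieldI1)

lemma ofilter_linear: "Well_order r \<Longrightarrow> ofilter r A \<Longrightarrow> ofilter r B \<Longrightarrow> A \<subseteq> B \<or> B \<subseteq> A"
  using wo_rel.ofilter_linord wo_rel_def by blast

lemma minc_unique: "Well_order r \<Longrightarrow> minc r A a \<Longrightarrow> minc r A a' \<Longrightarrow> a = a'"
  unfolding minc_def using WO_antisym by metis

lemma minc_mem: assumes "Well_order r" "ofilter r B0" "minc r B b" "\<not> B0 \<subseteq> B" shows "b \<in> B0"
proof -
  obtain d where d: "d \<in> B0" "d \<notin> B" using assms(4) by blast
  have "d \<in> Field r" using d(1) ofilter_sub[OF assms(2)] by blast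
  then have "(b,d) \<in> r" using assms(3) d(2) unfolding minc_def by blast
  then show ?thesis using ofilter_down[OF assms(2) d(1)] by blast
qed

lemma minc_in: "minc r A a \<Longrightarrow> a \<in> Field r \<and> a \<notin> A" unfolding minc_def by blast

lemma transport:
  assumes wx: "Well_order (fst x)" and wy: "Well_order (fst y)"
    and A: "ofilter (fst x) A" and B: "ofilter (fst y) B"
    and g: "isom (rs x A) (rs y B) g" and A': "ofilter (fst x) A'" and sub: "A' \<subseteq> A"
  shows "ofilter (fst y) (g ` A')" "g ` A' \<subseteq> B" "isom (rs x A') (rs y (g ` A')) g"
proof -
  have fA: "fld (rs x A) = A" using fld_rsA[OF wx A] .
  have fB: "fld (rs y B) = B" using fld_rsA[OF wy B] .
  have gb: "bij_betw g A B" using isomD1[OF g] fA fB by simp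
  have gin: "\<And>a. a \<in> A \<Longrightarrow> g a \<in> B" using gb bij_betwE by blast
  have gsurj: "g ` A = B" using gb by (simp add: bij_betw_def)
  have gord: "\<And>a1 a2. a1 \<in> A \<Longrightarrow> a2 \<in> A \<Longrightarrow> (a1,a2) \<in> fst x \<longleftrightarrow> (g a1, g a2) \<in> fst y"
  proof -
    fix a1 a2 assume a1: "a1 \<in> A" and a2: "a2 \<in> A"
    have "(a1,a2) \<in> fst (rs x A) \<longleftrightarrow> (g a1, g a2) \<in> fst (rs y B)"
      using isomD2[OF g] a1 a2 fA by blast
    then show "(a1,a2) \<in> fst x \<longleftrightarrow> (g a1, g a2) \<in> fst y" using a1 a2 gin[OF a1] gin[OF a2] by auto
  qed
  show s2: "g ` A' \<subseteq> B" using gin sub by blast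
  show "ofilter (fst y) (g ` A')"
  proof (rule ofilterI)
    show "g ` A' \<subseteq> fld y" using s2 ofilter_sub[OF B] by blast
  next
    fix b' c assume b': "b' \<in> g ` A'" and cb: "(c, b') \<in> fst y"
    obtain a' where a': "a' \<in> A'" "b' = g a'" using b' by blast
    have "c \<in> B" using ofilter_down[OF B _ cb] s2 b' by blast
    then obtain a0 where a0: "a0 \<in> A" "c = g a0" using gsurj by blast
    have "(a0, a') \<in> fst x" using gord[OF a0(1)] sub a'(1) cb a'(2) a0(2) by blast
    then have "a0 \<in> A'" using ofilter_down[OF A' a'(1)] by blast
    then show "c \<in> g ` A'" using a0(2) by blast
  qed
  have "isom (rs (rs x A) A') (rs (rs y B) (g ` A')) g"
    using isom_rs[OF WO_rs[OF wx] WO_rs[OF wy] g] sub fA by simp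
  moreover have "A \<inter> A' = A'" using sub by blast
  moreover have "B \<inter> g ` A' = g ` A'" using s2 by blast
  ultimately show "isom (rs x A') (rs y (g ` A')) g" by (simp add: rs_rs)
qed

lemma transport_minc:
  assumes wx: "Well_order (fst x)" and wy: "Well_order (fst y)"
    and A: "ofilter (fst x) A" and B: "ofilter (fst y) B"
    and g: "isom (rs x A) (rs y B) g" and sub: "A' \<subseteq> A" and m: "minc (fst x) A' a" and aA: "a \<in> A"
  shows "minc (fst y) (g ` A') (g a)"
proof -
  have fA: "fld (rs x A) = A" using fld_rsA[OF wx A] .
  have fB: "fld (rs y B) = B" using fld_rsA[OF wy B] .
  have gb: "bij_betw g A B" using isomD1[OF g] fA fB by simp
  have gin: "\<And>a. a \<in> A \<Longrightarrow> g a \<in> B" using gb bij_betwE by blast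
  have ginj: "inj_on g A" using gb by (simp add: bij_betw_def)
  have gsurj: "g ` A = B" using gb by (simp add: bij_betw_def)
  have gord: "\<And>a1 a2. a1 \<in> A \<Longrightarrow> a2 \<in> A \<Longrightarrow> (a1,a2) \<in> fst x \<longleftrightarrow> (g a1, g a2) \<in> fst y"
  proof -
    fix a1 a2 assume a1: "a1 \<in> A" and a2: "a2 \<in> A"
    have "(a1,a2) \<in> fst (rs x A) \<longleftrightarrow> (g a1, g a2) \<in> fst (rs y B)"
      using isomD2[OF g] a1 a2 fA by blast
    then show "(a1,a2) \<in> fst x \<longleftrightarrow> (g a1, g a2) \<in> fst y" using a1 a2 gin[OF a1] gin[OF a2] by auto
  qed
  have anA': "a \<notin> A'" using minc_in[OF m] by blast
  have gaB: "g a \<in> B" using gin[OF aA] .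
  have gaf: "g a \<in> fld y" using gaB ofilter_sub[OF B] by blast
  have gn: "g a \<notin> g ` A'"
  proof
    assume "g a \<in> g ` A'"
    then obtain a' where "a' \<in> A'" "g a = g a'" by blast
    then have "a = a'" using inj_onD[OF ginj] aA sub by blast
    then show False using anA' \<open>a' \<in> A'\<close> by simp
  qed
  show ?thesis unfolding minc_def
  proof (intro conjI ballI impI)
    show "g a \<in> fld y" by (rule gaf)
    show "g a \<notin> g ` A'" by (rule gn)
  next
    fix c assume c: "c \<in> fld y" and cn: "c \<notin> g ` A'"
    show "(g a, c) \<in> fst y"
    proof (cases "c \<in> B")
      case True
      then obtain a0 where a0: "a0 \<in> A" "c = g a0" using gsurj by blast
      have "a0 \<notin> A'" using cn a0 by blast
      moreover have "a0 \<in> fld x" using a0(1) ofilter_sub[OF A] by blast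
      ultimately have "(a, a0) \<in> fst x" using m unfolding minc_def by blast
      then show ?thesis using gord[OF aA a0(1)] a0(2) by simp
    next
      case False
      have "(g a, c) \<in> fst y \<or> (c, g a) \<in> fst y" using WO_total[OF wy gaf c] .
      moreover have "(c, g a) \<notin> fst y" using ofilter_down[OF B gaB] False by blast
      ultimately show ?thesis by blast
    qed
  qed
qed

lemma rigid:
  assumes wx: "Well_order (fst x)" and A: "ofilter (fst x) A" and A': "ofilter (fst x) A'"
    and e: "weq (rs x A) (rs x A')"
  shows "A = A'"
proof (rule ccontr)
  assume ne: "A \<noteq> A'"
  obtain g where g: "isom (rs x A) (rs x A') g" using e weq_isom by blast
  have "iso (Restr (fst x) A) (Restr (fst x) A') g"
    unfolding iso_iff2 using isomD1[OF g] isomD2[OF g] by simp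
  then have io: "(Restr (fst x) A, Restr (fst x) A') \<in> ordIso"
    unfolding ordIso_def using Well_order_Restr wx by blast
  have "A \<subset> A' \<or> A' \<subset> A" using ofilter_linear[OF wx A A'] ne by blast
  then show False
  proof
    assume "A \<subset> A'"
    then have "(Restr (fst x) A, Restr (fst x) A') \<in> ordLess" using ofilter_subset_ordLess[OF wx A A'] by blast
    then show False using io not_ordLess_ordIso by blast
  next
    assume "A' \<subset> A"
    then have "(Restr (fst x) A', Restr (fst x) A) \<in> ordLess" using ofilter_subset_ordLess[OF wx A' A] by blast
    then show False using ordIso_symmetric[OF io] not_ordLess_ordIso by blast
  qed
qed


abbreviation WO :: "('i,'a) wd \<Rightarrow> bool" where "WO x \<equiv> Well_order (fst x)"

lemma isom_full: "isom x y g \<Longrightarrow> isom (rs x (fld x)) (rs y (fld y)) g" by simp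

lemma pre_refl: "WO x \<Longrightarrow> pre x x"
  unfolding pre_def using ofilter_fld weq_refl rs_fld by metis

lemma weq_pre: assumes "weq x y" "WO y" shows "pre x y"
  unfolding pre_def using assms ofilter_fld rs_fld by metis

lemma pre_weq_left: "weq x' x \<Longrightarrow> pre x y \<Longrightarrow> pre x' y"
  unfolding pre_def using weq_trans by blast

lemma pre_trans: assumes wy: "WO y" and wz: "WO z" and p1: "pre x y" and p2: "pre y z" shows "pre x z"
proof -
  obtain B where B: "ofilter (fst y) B" "weq x (rs y B)" using p1 unfolding pre_def by blast
  obtain C where C: "ofilter (fst z) C" "weq y (rs z C)" using p2 unfolding pre_def by blast
  obtain g where g: "isom y (rs z C) g" using C(2) weq_isom by blast
  have g': "isom (rs y (fld y)) (rs z C) g" using g by simp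
  have Bs: "B \<subseteq> fld y" using ofilter_sub[OF B(1)] .
  have t1: "ofilter (fst z) (g ` B)" using transport(1)[OF wy wz ofilter_fld[OF wy] C(1) g' B(1) Bs] .
  have t2: "isom (rs y B) (rs z (g ` B)) g" using transport(3)[OF wy wz ofilter_fld[OF wy] C(1) g' B(1) Bs] .
  have "weq x (rs z (g ` B))" using B(2) t2 weq_isom weq_trans by blast
  then show ?thesis unfolding pre_def using t1 by blast
qed

lemma pre_weq_right: assumes "WO y" "WO y'" "pre x y" "weq y y'" shows "pre x y'"
  using pre_trans[OF assms(1,2,3) weq_pre[OF assms(4,2)]] .

lemma strl_pre_right: assumes wx: "WO x" and wy: "WO y" and wz: "WO z"
  and s: "strl x y" and p: "pre y z" shows "strl x z"
proof -
  obtain A B a b where AB: "ofilter (fst x) A" "ofilter (fst y) B" "weq (rs x A) (rs y B)"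
      "minc (fst x) A a" "minc (fst y) B b" "snd x a < snd y b" using s unfolding strl_def by blast
  obtain C where C: "ofilter (fst z) C" "weq y (rs z C)" using p unfolding pre_def by blast
  obtain g where g: "isom y (rs z C) g" using C(2) weq_isom by blast
  have g': "isom (rs y (fld y)) (rs z C) g" using g by simp
  have Bs: "B \<subseteq> fld y" using ofilter_sub[OF AB(2)] .
  have t1: "ofilter (fst z) (g ` B)" using transport(1)[OF wy wz ofilter_fld[OF wy] C(1) g' AB(2) Bs] .
  have t2: "isom (rs y B) (rs z (g ` B)) g" using transport(3)[OF wy wz ofilter_fld[OF wy] C(1) g' AB(2) Bs] .
  have bf: "b \<in> fld y" using minc_in[OF AB(5)] by blast
  have t3: "minc (fst z) (g ` B) (g b)" using transport_minc[OF wy wz ofilter_fld[OF wy] C(1) g' Bs AB(5) bf] .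
  have l: "snd z (g b) = snd y b" using isomD3[OF g bf] by simp
  have "weq (rs x A) (rs z (g ` B))" using AB(3) t2 weq_isom weq_trans by blast
  then show ?thesis unfolding strl_def using AB(1) t1 AB(4) t3 AB(6) l by force
qed

lemma strl_pre_left: assumes wx: "WO x" and wx': "WO x'" and wy: "WO y"
  and s: "strl x y" and p: "pre x x'" shows "strl x' y"
proof -
  obtain A B a b where AB: "ofilter (fst x) A" "ofilter (fst y) B" "weq (rs x A) (rs y B)"
      "minc (fst x) A a" "minc (fst y) B b" "snd x a < snd y b" using s unfolding strl_def by blast
  obtain C where C: "ofilter (fst x') C" "weq x (rs x' C)" using p unfolding pre_def by blast
  obtain g where g: "isom x (rs x' C) g" using C(2) weq_isom by blast
  have g': "isom (rs x (fld x)) (rs x' C) g" using g by simp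
  have As: "A \<subseteq> fld x" using ofilter_sub[OF AB(1)] .
  have t1: "ofilter (fst x') (g ` A)" using transport(1)[OF wx wx' ofilter_fld[OF wx] C(1) g' AB(1) As] .
  have t2: "isom (rs x A) (rs x' (g ` A)) g" using transport(3)[OF wx wx' ofilter_fld[OF wx] C(1) g' AB(1) As] .
  have af: "a \<in> fld x" using minc_in[OF AB(4)] by blast
  have t3: "minc (fst x') (g ` A) (g a)" using transport_minc[OF wx wx' ofilter_fld[OF wx] C(1) g' As AB(4) af] .
  have l: "snd x' (g a) = snd x a" using isomD3[OF g af] by simp
  have "weq (rs x' (g ` A)) (rs y B)" using AB(3) t2 weq_isom weq_trans weq_sym by blast
  then show ?thesis unfolding strl_def using t1 AB(2) t3 AB(5) AB(6) l by force
qed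

lemma strl_weq_right: "WO x \<Longrightarrow> WO y \<Longrightarrow> WO z \<Longrightarrow> strl x y \<Longrightarrow> weq y z \<Longrightarrow> strl x z"
  using strl_pre_right weq_pre by blast

lemma strl_weq_left: "WO x \<Longrightarrow> WO x' \<Longrightarrow> WO y \<Longrightarrow> strl x y \<Longrightarrow> weq x x' \<Longrightarrow> strl x' y"
  using strl_pre_left weq_pre by blast

lemma pre_strl: assumes wx: "WO x" and wy: "WO y" and wz: "WO z"
  and p: "pre x y" and s: "strl y z" shows "strl x z \<or> pre x z"
proof -
  obtain B0 where B0: "ofilter (fst y) B0" "weq x (rs y B0)" using p unfolding pre_def by blast
  obtain B C b c where BC: "ofilter (fst y) B" "ofilter (fst z) C" "weq (rs y B) (rs z C)"
      "minc (fst y) B b" "minc (fst z) C c" "snd y b < snd z c" using s unfolding strl_def by blast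
  obtain h where h: "isom (rs y B) (rs z C) h" using BC(3) weq_isom by blast
  show ?thesis
  proof (cases "B0 \<subseteq> B")
    case True
    have t1: "ofilter (fst z) (h ` B0)" using transport(1)[OF wy wz BC(1) BC(2) h B0(1) True] .
    have t2: "isom (rs y B0) (rs z (h ` B0)) h" using transport(3)[OF wy wz BC(1) BC(2) h B0(1) True] .
    have "weq x (rs z (h ` B0))" using B0(2) t2 weq_isom weq_trans by blast
    then show ?thesis unfolding pre_def using t1 by blast
  next
    case False
    have bB0: "b \<in> B0" using minc_mem[OF wy B0(1) BC(4) False] .
    have BB0: "B \<subseteq> B0" using ofilter_linear[OF wy B0(1) BC(1)] False by blast
    obtain k where k: "isom (rs y B0) x k" using B0(2) weq_sym weq_isom by blast
    have k': "isom (rs y B0) (rs x (fld x)) k" using k by simp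
    have t1: "ofilter (fst x) (k ` B)" using transport(1)[OF wy wx B0(1) ofilter_fld[OF wx] k' BC(1) BB0] .
    have t2: "isom (rs y B) (rs x (k ` B)) k" using transport(3)[OF wy wx B0(1) ofilter_fld[OF wx] k' BC(1) BB0] .
    have t3: "minc (fst x) (k ` B) (k b)" using transport_minc[OF wy wx B0(1) ofilter_fld[OF wx] k' BB0 BC(4) bB0] .
    have l: "snd x (k b) = snd y b" using isomD3[OF k] bB0 fld_rsA[OF wy B0(1)] by simp
    have "weq (rs x (k ` B)) (rs z C)" using BC(3) t2 weq_isom weq_trans weq_sym by blast
    then have "strl x z" unfolding strl_def using t1 BC(2) t3 BC(5) BC(6) l by force
    then show ?thesis by blast
  qed
qed

lemma strl_trans: assumes wx: "WO x" and wy: "WO y" and wz: "WO z"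
  and s1: "strl x y" and s2: "strl y z" shows "strl x z"
proof -
  obtain A B a b where AB: "ofilter (fst x) A" "ofilter (fst y) B" "weq (rs x A) (rs y B)"
      "minc (fst x) A a" "minc (fst y) B b" "snd x a < snd y b" using s1 unfolding strl_def by blast
  obtain B' C b' c where BC: "ofilter (fst y) B'" "ofilter (fst z) C" "weq (rs y B') (rs z C)"
      "minc (fst y) B' b'" "minc (fst z) C c" "snd y b' < snd z c" using s2 unfolding strl_def by blast
  consider (eq) "B = B'" | (lt) "B \<subseteq> B'" "\<not> B' \<subseteq> B" | (gt) "B' \<subseteq> B" "\<not> B \<subseteq> B'"
    using ofilter_linear[OF wy AB(2) BC(1)] by blast
  then show ?thesis
  proof cases
    case eq
    then have "b = b'" using minc_unique[OF wy AB(5)] BC(4) by simp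
    moreover have "weq (rs x A) (rs z C)" using AB(3) BC(3) eq weq_trans by blast
    ultimately show ?thesis unfolding strl_def using AB(1,4,6) BC(2,5,6) by force
  next
    case lt
    have bB: "b \<in> B'" using minc_mem[OF wy BC(1) AB(5) lt(2)] .
    obtain h where h: "isom (rs y B') (rs z C) h" using BC(3) weq_isom by blast
    have t1: "ofilter (fst z) (h ` B)" using transport(1)[OF wy wz BC(1) BC(2) h AB(2) lt(1)] .
    have t2: "isom (rs y B) (rs z (h ` B)) h" using transport(3)[OF wy wz BC(1) BC(2) h AB(2) lt(1)] .
    have t3: "minc (fst z) (h ` B) (h b)" using transport_minc[OF wy wz BC(1) BC(2) h lt(1) AB(5) bB] .
    have l: "snd z (h b) = snd y b" using isomD3[OF h] bB fld_rsA[OF wy BC(1)] by simp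
    have "weq (rs x A) (rs z (h ` B))" using AB(3) t2 weq_isom weq_trans by blast
    then show ?thesis unfolding strl_def using AB(1,4,6) t1 t3 l by force
  next
    case gt
    have bB: "b' \<in> B" using minc_mem[OF wy AB(2) BC(4) gt(2)] .
    obtain k where k: "isom (rs y B) (rs x A) k" using AB(3) weq_sym weq_isom by blast
    have t1: "ofilter (fst x) (k ` B')" using transport(1)[OF wy wx AB(2) AB(1) k BC(1) gt(1)] .
    have t2: "isom (rs y B') (rs x (k ` B')) k" using transport(3)[OF wy wx AB(2) AB(1) k BC(1) gt(1)] .
    have t3: "minc (fst x) (k ` B') (k b')" using transport_minc[OF wy wx AB(2) AB(1) k gt(1) BC(4) bB] .
    have l: "snd x (k b') = snd y b'" using isomD3[OF k] bB fld_rsA[OF wy AB(2)] by simp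
    have "weq (rs x (k ` B')) (rs z C)" using BC(3) t2 weq_isom weq_trans weq_sym by blast
    then show ?thesis unfolding strl_def using BC(2,5,6) t1 t3 l by force
  qed
qed

lemma pre_antisym: assumes wx: "WO x" and wy: "WO y" and p1: "pre x y" and p2: "pre y x" shows "weq x y"
proof -
  obtain B where B: "ofilter (fst y) B" "weq x (rs y B)" using p1 unfolding pre_def by blast
  obtain A where A: "ofilter (fst x) A" "weq y (rs x A)" using p2 unfolding pre_def by blast
  obtain g where g: "isom y (rs x A) g" using A(2) weq_isom by blast
  have g': "isom (rs y (fld y)) (rs x A) g" using g by simp
  have Bs: "B \<subseteq> fld y" using ofilter_sub[OF B(1)] .
  have t1: "ofilter (fst x) (g ` B)" using transport(1)[OF wy wx ofilter_fld[OF wy] A(1) g' B(1) Bs] .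
  have t2: "g ` B \<subseteq> A" using transport(2)[OF wy wx ofilter_fld[OF wy] A(1) g' B(1) Bs] .
  have t3: "isom (rs y B) (rs x (g ` B)) g" using transport(3)[OF wy wx ofilter_fld[OF wy] A(1) g' B(1) Bs] .
  have "weq (rs x (fld x)) (rs x (g ` B))" using B(2) t3 weq_isom weq_trans by (metis rs_fld)
  then have "fld x = g ` B" using rigid[OF wx ofilter_fld[OF wx] t1] by blast
  then have "A = fld x" using t2 ofilter_sub[OF A(1)] by blast
  then have "weq y x" using A(2) by simp
  then show ?thesis by (rule weq_sym)
qed

lemma strl_pre_contra: assumes wx: "WO x" and wy: "WO y" and s: "strl x y" and p: "pre y x" shows False
proof -
  obtain A B a b where AB: "ofilter (fst x) A" "ofilter (fst y) B" "weq (rs x A) (rs y B)"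
      "minc (fst x) A a" "minc (fst y) B b" "snd x a < snd y b" using s unfolding strl_def by blast
  obtain A0 where A0: "ofilter (fst x) A0" "weq y (rs x A0)" using p unfolding pre_def by blast
  obtain g where g: "isom y (rs x A0) g" using A0(2) weq_isom by blast
  have g': "isom (rs y (fld y)) (rs x A0) g" using g by simp
  have Bs: "B \<subseteq> fld y" using ofilter_sub[OF AB(2)] .
  have t1: "ofilter (fst x) (g ` B)" using transport(1)[OF wy wx ofilter_fld[OF wy] A0(1) g' AB(2) Bs] .
  have t3: "isom (rs y B) (rs x (g ` B)) g" using transport(3)[OF wy wx ofilter_fld[OF wy] A0(1) g' AB(2) Bs] .
  have bf: "b \<in> fld y" using minc_in[OF AB(5)] by blast
  have t4: "minc (fst x) (g ` B) (g b)" using transport_minc[OF wy wx ofilter_fld[OF wy] A0(1) g' Bs AB(5) bf] .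
  have "weq (rs x A) (rs x (g ` B))" using AB(3) t3 weq_isom weq_trans by blast
  then have "A = g ` B" using rigid[OF wx AB(1) t1] by blast
  then have "g b = a" using minc_unique[OF wx t4] AB(4) by simp
  moreover have "snd y b = snd x (g b)" using isomD3[OF g bf] by simp
  ultimately show False using AB(6) by simp
qed

lemma strl_irrefl: assumes wx: "WO x" and s: "strl x x" shows False
proof -
  obtain A B a b where AB: "ofilter (fst x) A" "ofilter (fst x) B" "weq (rs x A) (rs x B)"
      "minc (fst x) A a" "minc (fst x) B b" "snd x a < snd x b" using s unfolding strl_def by blast
  have "A = B" using rigid[OF wx AB(1) AB(2) AB(3)] .
  then have "a = b" using minc_unique[OF wx AB(4)] AB(5) by simp
  then show False using AB(6) by simp
qed

definition le :: "('i,'a::linorder) wd \<Rightarrow> ('j,'a) wd \<Rightarrow> bool" where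
  "le x y \<longleftrightarrow> pre x y \<or> strl x y"

definition lt :: "('i,'a::linorder) wd \<Rightarrow> ('j,'a) wd \<Rightarrow> bool" where
  "lt x y \<longleftrightarrow> le x y \<and> \<not> weq x y"

lemma pre_le: "pre x y \<Longrightarrow> le x y" unfolding le_def by blast
lemma strl_le: "strl x y \<Longrightarrow> le x y" unfolding le_def by blast

lemma le_trans: assumes "WO x" "WO y" "WO z" "le x y" "le y z" shows "le x z"
  using assms pre_trans strl_pre_right pre_strl strl_trans unfolding le_def by metis

lemma le_antisym: assumes wx: "WO x" and wy: "WO y" and l1: "le x y" and l2: "le y x" shows "weq x y"
proof -
  have "pre x y \<and> pre y x" 
    using l1 l2 strl_pre_contra[OF wx wy] strl_pre_contra[OF wy wx] strl_trans[OF wx wy wx] strl_irrefl[OF wx]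
    unfolding le_def by blast
  then show ?thesis using pre_antisym[OF wx wy] by blast
qed

lemma weq_le: "weq x y \<Longrightarrow> WO y \<Longrightarrow> le x y" using weq_pre pre_le by blast

lemma le_weq_right: "WO x \<Longrightarrow> WO y \<Longrightarrow> WO z \<Longrightarrow> le x y \<Longrightarrow> weq y z \<Longrightarrow> le x z"
  using le_trans weq_le by blast

lemma le_weq_left: "WO x \<Longrightarrow> WO x' \<Longrightarrow> WO y \<Longrightarrow> le x y \<Longrightarrow> weq x' x \<Longrightarrow> le x' y"
  using le_trans weq_le by blast

lemma lt_le_trans: assumes "WO x" "WO y" "WO z" "lt x y" "le y z" shows "lt x z"
proof -
  have l1: "le x y" "\<not> weq x y" using assms(4) unfolding lt_def by auto
  have l2: "le x z" using le_trans assms(1,2,3) l1(1) assms(5) by blast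
  have "\<not> weq x z"
  proof
    assume "weq x z"
    then have "le z x" using weq_le weq_sym assms(1) by blast
    then have "le y x" using le_trans assms(2,3,1) assms(5) by blast
    then show False using le_antisym assms(1,2) l1 by blast
  qed
  then show ?thesis using l2 unfolding lt_def by blast
qed

lemma le_lt_trans: assumes "WO x" "WO y" "WO z" "le x y" "lt y z" shows "lt x z"
proof -
  have l1: "le y z" "\<not> weq y z" using assms(5) unfolding lt_def by auto
  have l2: "le x z" using le_trans assms(1,2,3) assms(4) l1(1) by blast
  have "\<not> weq x z"
  proof
    assume "weq x z"
    then have "le z x" using weq_le weq_sym assms(1) by blast
    then have "le z y" using le_trans assms(3,1,2) assms(4) by blast
    then show False using le_antisym assms(2,3) l1 by blast
  qed
  then show ?thesis using l2 unfolding lt_def by blast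
qed

lemma lt_not_le: assumes "WO x" "WO y" "lt x y" shows "\<not> le y x"
  using assms le_antisym unfolding lt_def by blast


lemma wo_min: assumes "Well_order r" "B \<subseteq> Field r" "B \<noteq> {}" shows "\<exists>m\<in>B. \<forall>b\<in>B. (m,b) \<in> r"
proof -
  have w: "wo_rel r" using assms(1) wo_rel_def by blast
  have "wo_rel.minim r B \<in> B" using wo_rel.minim_in[OF w assms(2,3)] .
  moreover have "\<forall>b\<in>B. (wo_rel.minim r B, b) \<in> r" using wo_rel.minim_least[OF w assms(2)] by blast
  ultimately show ?thesis by blast
qed

lemma minc_ex: assumes "Well_order r" "B \<subseteq> Field r" "B \<noteq> Field r" shows "\<exists>k. minc r B k"
proof -
  obtain m where m: "m \<in> Field r - B" "\<forall>b\<in>Field r - B. (m,b) \<in> r"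
    using wo_min[OF assms(1), of "Field r - B"] assms(2,3) by blast
  then show ?thesis unfolding minc_def by blast
qed

lemma embed_le:
  assumes wx: "WO x" and wy: "WO y" and em: "embed (fst x) (fst y) f"
  shows "le x y \<or> le y x"
proof -
  have comp: "\<And>a b. (a,b) \<in> fst x \<Longrightarrow> (f a, f b) \<in> fst y"
    using embed_compat[OF em] unfolding compat_def by blast
  have inj: "inj_on f (fld x)" using embed_inj_on[OF wx em] .
  have ofi: "ofilter (fst y) (f ` fld x)" using embed_Field_ofilter[OF wx wy em] .
  have fin: "\<And>a. a \<in> fld x \<Longrightarrow> f a \<in> fld y" using ofilter_sub[OF ofi] by blast
  have refl: "\<And>a b. a \<in> fld x \<Longrightarrow> b \<in> fld x \<Longrightarrow> (f a, f b) \<in> fst y \<Longrightarrow> (a,b) \<in> fst x"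
  proof -
    fix a b assume a: "a \<in> fld x" and b: "b \<in> fld x" and ab: "(f a, f b) \<in> fst y"
    show "(a,b) \<in> fst x"
    proof (rule ccontr)
      assume n: "(a,b) \<notin> fst x"
      then have "(b,a) \<in> fst x" using WO_total[OF wx a b] by blast
      then have "(f b, f a) \<in> fst y" by (rule comp)
      then have "f a = f b" using WO_antisym[OF wy ab] by blast
      then have "a = b" using inj_onD[OF inj _ a b] by blast
      then show False using n WO_refl_pt[OF wx a] by simp
    qed
  qed
  have isoA: "\<And>A. A \<subseteq> fld x \<Longrightarrow> (\<forall>d\<in>A. snd x d = snd y (f d)) \<Longrightarrow> isom (rs x A) (rs y (f ` A)) f"
  proof -
    fix A assume A: "A \<subseteq> fld x" and l: "\<forall>d\<in>A. snd x d = snd y (f d)"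
    have fA: "f ` A \<subseteq> fld y" using A fin by blast
    show "isom (rs x A) (rs y (f ` A)) f"
    proof (rule isomI)
      show "bij_betw f (fld (rs x A)) (fld (rs y (f ` A)))"
        unfolding fld_rs[OF wx A] fld_rs[OF wy fA] using inj A inj_on_subset bij_betw_imageI by blast
    next
      fix p q assume "p \<in> fld (rs x A)" "q \<in> fld (rs x A)"
      then have pq: "p \<in> A" "q \<in> A" using fld_rs[OF wx A] by auto
      have pq': "p \<in> fld x" "q \<in> fld x" using pq A by auto
      have "(p, q) \<in> fst x \<longleftrightarrow> (f p, f q) \<in> fst y" using comp refl[OF pq'] by blast
      then show "(p, q) \<in> fst (rs x A) \<longleftrightarrow> (f p, f q) \<in> fst (rs y (f ` A))"
        using pq by auto
    next
      fix p assume "p \<in> fld (rs x A)"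
      then show "snd (rs x A) p = snd (rs y (f ` A)) (f p)" using l fld_rs[OF wx A] by auto
    qed
  qed
  define Dd where "Dd = {d \<in> fld x. snd x d \<noteq> snd y (f d)}"
  show ?thesis
  proof (cases "Dd = {}")
    case True
    then have "isom (rs x (fld x)) (rs y (f ` fld x)) f" using isoA[of "fld x"] Dd_def by blast
    then have "pre x y" unfolding pre_def using ofi weq_isom rs_fld by metis
    then show ?thesis using pre_le by blast
  next
    case False
    obtain m where m: "m \<in> Dd" "\<forall>b\<in>Dd. (m,b) \<in> fst x"
      using wo_min[OF wx, of Dd] False Dd_def by blast
    have mf: "m \<in> fld x" using m(1) Dd_def by blast
    define A where "A = {d \<in> fld x. (d,m) \<in> fst x \<and> d \<noteq> m}"
    have As: "A \<subseteq> fld x" using A_def by blast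
    have Aof: "ofilter (fst x) A"
    proof (rule ofilterI)
      show "A \<subseteq> fld x" by (rule As)
    next
      fix a b assume a: "a \<in> A" and ba: "(b,a) \<in> fst x"
      have bf: "b \<in> fld x" using ba by (simp add: FieldI1)
      have am: "(a,m) \<in> fst x" "a \<noteq> m" using a A_def by auto
      have bm: "(b,m) \<in> fst x" using WO_trans[OF wx ba am(1)] .
      have "b \<noteq> m"
      proof
        assume "b = m"
        then have "a = m" using WO_antisym[OF wx am(1)] ba by blast
        then show False using am(2) by simp
      qed
      then show "b \<in> A" using A_def bf bm by blast
    qed
    have lA: "\<forall>d\<in>A. snd x d = snd y (f d)"
    proof
      fix d assume d: "d \<in> A"
      show "snd x d = snd y (f d)"
      proof (rule ccontr)
        assume "snd x d \<noteq> snd y (f d)"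
        then have "d \<in> Dd" using d A_def Dd_def by blast
        then have "(m,d) \<in> fst x" using m(2) by blast
        then show False using d A_def WO_antisym[OF wx] by blast
      qed
    qed
    have iA: "isom (rs x A) (rs y (f ` A)) f" using isoA[OF As lA] .
    have fAof: "ofilter (fst y) (f ` A)" using embed_preserves_ofilter[OF wx wy em Aof] .
    have mc1: "minc (fst x) A m" unfolding minc_def
    proof (intro conjI ballI impI)
      show "m \<in> fld x" by (rule mf)
      show "m \<notin> A" using A_def by blast
    next
      fix c assume c: "c \<in> fld x" "c \<notin> A"
      show "(m,c) \<in> fst x"
      proof (cases "c = m")
        case True then show ?thesis using WO_refl_pt[OF wx mf] by simp
      next
        case False
        then show ?thesis using WO_total[OF wx mf c(1)] c A_def by blast
      qed
    qed
    have mc2: "minc (fst y) (f ` A) (f m)" unfolding minc_def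
    proof (intro conjI ballI impI)
      show "f m \<in> fld y" using fin[OF mf] .
      show "f m \<notin> f ` A"
      proof
        assume "f m \<in> f ` A"
        then obtain a where a: "a \<in> A" "f m = f a" by blast
        then have "m = a" using inj_onD[OF inj] As mf by blast
        then show False using a A_def by blast
      qed
    next
      fix c assume c: "c \<in> fld y" "c \<notin> f ` A"
      show "(f m, c) \<in> fst y"
      proof (cases "c \<in> f ` fld x")
        case True
        then obtain c0 where c0: "c0 \<in> fld x" "c = f c0" by blast
        then have "c0 \<notin> A" using c(2) by blast
        then have "(m,c0) \<in> fst x" using mc1 c0(1) unfolding minc_def by blast
        then show ?thesis using comp c0(2) by blast
      next
        case False
        have "(c, f m) \<notin> fst y" using ofilter_down[OF ofi _ ] mf False by blast
        then show ?thesis using WO_total[OF wy fin[OF mf] c(1)] by blast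
      qed
    qed
    have ne: "snd x m \<noteq> snd y (f m)" using m(1) Dd_def by blast
    have w1: "weq (rs x A) (rs y (f ` A))" using iA weq_isom by blast
    show ?thesis
    proof (cases "snd x m < snd y (f m)")
      case True
      then have "strl x y" unfolding strl_def using Aof fAof w1 mc1 mc2 by blast
      then show ?thesis using strl_le by blast
    next
      case False
      then have "snd y (f m) < snd x m" using ne by simp
      then have "strl y x" unfolding strl_def using Aof fAof weq_sym[OF w1] mc1 mc2 by blast
      then show ?thesis using strl_le by blast
    qed
  qed
qed

lemma le_total: assumes wx: "WO x" and wy: "WO y" shows "le x y \<or> le y x"
proof -
  have "(\<exists>f. embed (fst x) (fst y) f) \<or> (\<exists>f. embed (fst y) (fst x) f)"
    using wellorders_totally_ordered[OF wx wy] .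
  then show ?thesis using embed_le[OF wx wy] embed_le[OF wy wx] by blast
qed

lemma not_le_lt: assumes "WO x" "WO y" "\<not> le x y" shows "lt y x"
  using assms le_total weq_le weq_sym unfolding lt_def by metis

definition VIOL :: "('i,'a::linorder) wd \<Rightarrow> ('j,'a) wd \<Rightarrow> 'j set \<Rightarrow> 'i set \<Rightarrow> ('j \<Rightarrow> 'i) \<Rightarrow> 'j \<Rightarrow> bool" where
  "VIOL p r B A g k \<longleftrightarrow> ofilter (fst r) B \<and> minc (fst r) B k \<and> ofilter (fst p) A
     \<and> isom (rs r B) (rs p A) g \<and> (A = fld p \<or> (\<exists>a. minc (fst p) A a \<and> snd p a < snd r k))"

lemma lt_VIOL: assumes wp: "WO p" and wr: "WO r" and l: "lt p r" shows "\<exists>B A g k. VIOL p r B A g k"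
proof -
  have l1: "pre p r \<or> strl p r" "\<not> weq p r" using l unfolding lt_def le_def by auto
  show ?thesis
  proof (cases "pre p r")
    case True
    obtain B where B: "ofilter (fst r) B" "weq p (rs r B)" using True unfolding pre_def by blast
    have Bs: "B \<subseteq> fld r" using ofilter_sub[OF B(1)] .
    have "B \<noteq> fld r" using B(2) l1(2) by auto
    then obtain k where k: "minc (fst r) B k" using minc_ex[OF wr Bs] by blast
    obtain g where g: "isom (rs r B) p g" using B(2) weq_sym weq_isom by blast
    then have g': "isom (rs r B) (rs p (fld p)) g" by simp
    show ?thesis unfolding VIOL_def using B(1) k ofilter_fld[OF wp] g' by blast
  next
    case False
    then have "strl p r" using l1 by blast
    then obtain A B a k where AB: "ofilter (fst p) A" "ofilter (fst r) B" "weq (rs p A) (rs r B)"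
      "minc (fst p) A a" "minc (fst r) B k" "snd p a < snd r k" unfolding strl_def by blast
    obtain g where g: "isom (rs r B) (rs p A) g" using AB(3) weq_sym weq_isom by blast
    show ?thesis unfolding VIOL_def using AB g by blast
  qed
qed

lemma VIOL_lt: assumes wp: "WO p" and wr: "WO r" and v: "VIOL p r B A g k"
  shows "lt p (rs r (B \<union> {k}))"
proof -
  have B: "ofilter (fst r) B" and k: "minc (fst r) B k" and A: "ofilter (fst p) A"
    and g: "isom (rs r B) (rs p A) g" and alt: "A = fld p \<or> (\<exists>a. minc (fst p) A a \<and> snd p a < snd r k)"
    using v unfolding VIOL_def by auto
  let ?S = "B \<union> {k}"
  let ?r' = "rs r ?S"
  have kf: "k \<in> fld r" "k \<notin> B" using minc_in[OF k] by auto
  have Ss: "?S \<subseteq> fld r" using ofilter_sub[OF B] kf by blast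
  have wr': "WO ?r'" using WO_rs[OF wr] .
  have fr': "fld ?r' = ?S" using fld_rs[OF wr Ss] .
  have Bof: "ofilter (fst ?r') B"
  proof (rule ofilterI)
    show "B \<subseteq> fld ?r'" using fr' by blast
  next
    fix a c assume a: "a \<in> B" and ca: "(c,a) \<in> fst ?r'"
    then show "c \<in> B" using ofilter_down[OF B a] by auto
  qed
  have kc: "minc (fst ?r') B k" unfolding minc_def
  proof (intro conjI ballI impI)
    show "k \<in> fld ?r'" using fr' by blast
    show "k \<notin> B" using kf by blast
  next
    fix c assume "c \<in> fld ?r'" "c \<notin> B"
    then have "c = k" using fr' by blast
    then show "(k,c) \<in> fst ?r'" using WO_refl_pt[OF wr kf(1)] by simp
  qed
  have "?S \<inter> B = B" by blast
  then have eB: "rs ?r' B = rs r B" by (simp add: rs_rs)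
  have nw: "\<not> weq (rs ?r' B) ?r'"
  proof
    assume "weq (rs ?r' B) ?r'"
    then have "weq (rs ?r' B) (rs ?r' (fld ?r'))" by (simp only: rs_fld)
    then have "B = fld ?r'" using rigid[OF wr' Bof ofilter_fld[OF wr']] by blast
    then show False using fr' kf by blast
  qed
  from alt show ?thesis
  proof
    assume Ap: "A = fld p"
    have "weq p (rs ?r' B)" using g Ap eB weq_isom weq_sym by (metis rs_fld)
    then have pp: "pre p ?r'" unfolding pre_def using Bof by blast
    have "\<not> weq p ?r'" using nw \<open>weq p (rs ?r' B)\<close> weq_sym weq_trans by blast
    then show ?thesis using pp pre_le unfolding lt_def by blast
  next
    assume "\<exists>a. minc (fst p) A a \<and> snd p a < snd r k"
    then obtain a where a: "minc (fst p) A a" "snd p a < snd r k" by blast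
    have "weq (rs p A) (rs ?r' B)" using g eB weq_isom weq_sym by metis
    then have s: "strl p ?r'" unfolding strl_def using A Bof a kc by auto
    have "\<not> weq p ?r'"
    proof
      assume "weq p ?r'"
      then have "pre ?r' p" using weq_pre[OF weq_sym wp] by blast
      then show False using strl_pre_contra[OF wp wr' s] by blast
    qed
    then show ?thesis using s strl_le unfolding lt_def by blast
  qed
qed

lemma VIOL_shift:
  assumes wp: "WO p" and wr: "WO r" and v: "VIOL p r B A g k" and P: "ofilter (fst r) P" and PB: "P \<subseteq> B"
  shows "ofilter (fst p) (g ` P)" "isom (rs r P) (rs p (g ` P)) g"
    "VIOL (rs p (fld p - g ` P)) (rs r (fld r - P)) (B - P) (A - g ` P) g k"
proof -
  have B: "ofilter (fst r) B" and k: "minc (fst r) B k" and A: "ofilter (fst p) A"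
    and g: "isom (rs r B) (rs p A) g" and alt: "A = fld p \<or> (\<exists>a. minc (fst p) A a \<and> snd p a < snd r k)"
    using v unfolding VIOL_def by auto
  show gP: "ofilter (fst p) (g ` P)" using transport(1)[OF wr wp B A g P PB] .
  have gPA: "g ` P \<subseteq> A" using transport(2)[OF wr wp B A g P PB] .
  show "isom (rs r P) (rs p (g ` P)) g" using transport(3)[OF wr wp B A g P PB] .
  have Bs: "B \<subseteq> fld r" using ofilter_sub[OF B] .
  have As: "A \<subseteq> fld p" using ofilter_sub[OF A] .
  have fB: "fld (rs r B) = B" using fld_rs[OF wr Bs] .
  have fA: "fld (rs p A) = A" using fld_rs[OF wp As] .
  have gb: "bij_betw g B A" using isomD1[OF g] fB fA by simp
  have kf: "k \<in> fld r" "k \<notin> B" using minc_in[OF k] by auto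
  let ?q = "rs p (fld p - g ` P)"
  let ?r2 = "rs r (fld r - P)"
  have fq: "fld ?q = fld p - g ` P" using fld_rs[OF wp, of "fld p - g ` P"] by blast
  have fr2: "fld ?r2 = fld r - P" using fld_rs[OF wr, of "fld r - P"] by blast
  have o1: "ofilter (fst ?r2) (B - P)"
  proof (rule ofilterI)
    show "B - P \<subseteq> fld ?r2" using fr2 Bs by blast
  next
    fix a c assume a: "a \<in> B - P" and ca: "(c,a) \<in> fst ?r2"
    then show "c \<in> B - P" using ofilter_down[OF B] by auto
  qed
  have o2: "minc (fst ?r2) (B - P) k" unfolding minc_def
  proof (intro conjI ballI impI)
    show "k \<in> fld ?r2" using fr2 kf PB by blast
    show "k \<notin> B - P" using kf by blast
  next
    fix c assume c: "c \<in> fld ?r2" "c \<notin> B - P"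
    then have "c \<in> fld r" "c \<notin> B" "c \<notin> P" using fr2 by auto
    then have "(k,c) \<in> fst r" using k unfolding minc_def by blast
    then show "(k,c) \<in> fst ?r2" using \<open>c \<notin> P\<close> \<open>c \<in> fld r\<close> kf PB by auto
  qed
  have o3: "ofilter (fst ?q) (A - g ` P)"
  proof (rule ofilterI)
    show "A - g ` P \<subseteq> fld ?q" using fq As by blast
  next
    fix a c assume a: "a \<in> A - g ` P" and ca: "(c,a) \<in> fst ?q"
    then show "c \<in> A - g ` P" using ofilter_down[OF A] by auto
  qed
  have e1: "rs ?r2 (B - P) = rs r (B - P)" by (simp add: rs_rs Int_absorb1 Diff_mono Bs)
  have e2: "rs ?q (A - g ` P) = rs p (A - g ` P)" by (simp add: rs_rs Int_absorb1 Diff_mono As)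
  have im: "g ` (B - P) = A - g ` P"
  proof -
    have ij: "inj_on g B" using gb by (simp add: bij_betw_def)
    have "g ` (B - P) = g ` B - g ` P" using inj_on_image_set_diff[OF ij _ PB] by blast
    then show ?thesis using gb by (simp add: bij_betw_def)
  qed
  have "isom (rs (rs r B) (B - P)) (rs (rs p A) (g ` (B - P))) g"
    using isom_rs[OF WO_rs[OF wr] WO_rs[OF wp] g] fB by blast
  then have o4: "isom (rs ?r2 (B - P)) (rs ?q (A - g ` P)) g"
    using e1 e2 im by (simp add: rs_rs Int_absorb1 Diff_mono gPA)
  have o5: "A - g ` P = fld ?q \<or> (\<exists>a. minc (fst ?q) (A - g ` P) a \<and> snd ?q a < snd ?r2 k)"
    using alt
  proof
    assume "A = fld p" then show ?thesis using fq by blast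
  next
    assume "\<exists>a. minc (fst p) A a \<and> snd p a < snd r k"
    then obtain a where a: "minc (fst p) A a" "snd p a < snd r k" by blast
    have af: "a \<in> fld p" "a \<notin> A" using minc_in[OF a(1)] by auto
    have "minc (fst ?q) (A - g ` P) a" unfolding minc_def
    proof (intro conjI ballI impI)
      show "a \<in> fld ?q" using fq af gPA by blast
      show "a \<notin> A - g ` P" using af by blast
    next
      fix c assume c: "c \<in> fld ?q" "c \<notin> A - g ` P"
      then have "c \<in> fld p" "c \<notin> A" "c \<notin> g ` P" using fq gPA by auto
      then have "(a,c) \<in> fst p" using a(1) unfolding minc_def by blast
      then show "(a,c) \<in> fst ?q" using \<open>c \<notin> g ` P\<close> \<open>c \<in> fld p\<close> af gPA by auto
    qed
    then show ?thesis using a(2) by auto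
  qed
  show "VIOL ?q ?r2 (B - P) (A - g ` P) g k" unfolding VIOL_def using o1 o2 o3 o4 o5 by blast
qed


lemma WO_empty: "Well_order ({} :: 'i rel)" by simp

lemma prime_nonempty: fixes w :: "(nat,'a::linorder) wd" assumes "prime_word w" shows "fld w \<noteq> {}"
proof
  assume e: "fld w = {}"
  have pw: "primitive w" using assms unfolding prime_word_def by blast
  have wfw: "wf_word w" using assms unfolding prime_word_def by blast
  have f0: "fld (wprod ({} :: nat rel) (\<lambda>_. w)) = {}" unfolding wprod_def Field_def by auto
  have "isom w (wprod ({} :: nat rel) (\<lambda>_. w)) (\<lambda>_. undefined)"
    by (rule isomI) (use e f0 in \<open>auto simp: bij_betw_def\<close>)
  then have "weq w (wprod ({} :: nat rel) (\<lambda>_. w))" using weq_isom by blast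
  then have "\<exists>b. Field ({} :: nat rel) = {b}" using pw wfw WO_empty unfolding primitive_def by blast
  then show False by simp
qed

lemma ofilter_Int: "ofilter r I \<Longrightarrow> ofilter r I' \<Longrightarrow> ofilter r (I \<inter> I')"
  unfolding Order_Relation.ofilter_def by blast

lemma ofilter_rsI: assumes wo: "WO x" and S: "S \<subseteq> fld x" and J: "J \<subseteq> S"
  and dn: "\<And>d d'. d \<in> J \<Longrightarrow> d' \<in> S \<Longrightarrow> (d',d) \<in> fst x \<Longrightarrow> d' \<in> J"
  shows "ofilter (fst (rs x S)) J"
proof (rule ofilterI)
  show "J \<subseteq> fld (rs x S)" using fld_rs[OF wo S] J by simp
next
  fix a b assume "a \<in> J" "(b,a) \<in> fst (rs x S)"
  then show "b \<in> J" using dn by auto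
qed

lemma pre_rs: assumes wo: "WO x" and S: "S \<subseteq> fld x" and J: "ofilter (fst (rs x S)) J"
  shows "pre (rs x J) (rs x S)"
proof -
  have "J \<subseteq> S" using ofilter_sub[OF J] fld_rs[OF wo S] by simp
  then have "rs (rs x S) J = rs x J" by (simp add: rs_rs Int_absorb1)
  then show ?thesis unfolding pre_def using J weq_refl by metis
qed

lemma proper_rs: assumes wo: "WO x" and S: "S \<subseteq> fld x" and J: "ofilter (fst (rs x S)) J" and ne: "J \<noteq> S"
  shows "\<not> weq (rs x J) (rs x S)"
proof
  assume e: "weq (rs x J) (rs x S)"
  have fS: "fld (rs x S) = S" using fld_rs[OF wo S] .
  have "J \<subseteq> S" using ofilter_sub[OF J] fS by simp
  then have "rs (rs x S) J = rs x J" by (simp add: rs_rs Int_absorb1)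
  then have "weq (rs (rs x S) J) (rs (rs x S) (fld (rs x S)))" using e by (simp only: rs_fld)
  then have "J = fld (rs x S)" using rigid[OF WO_rs[OF wo] J ofilter_fld[OF WO_rs[OF wo]]] by blast
  then show False using ne fS by simp
qed

lemma suffix_rs: fixes w :: "(nat,'a) wd"
  assumes wf: "wf_word w" and J: "ofilter (fst w) J" and ne1: "J \<noteq> {}" and ne2: "fld w - J \<noteq> {}"
  shows "proper_suffix (rs w (fld w - J)) w"
proof -
  have wo: "WO w" using wf unfolding wf_word_def by blast
  have Js: "J \<subseteq> fld w" using ofilter_sub[OF J] .
  have i1: "isom (rs w J) (rs w J) id" by (rule isom_id)
  have i2: "isom (rs w (fld w - J)) (rs w (fld w - J)) id" by (rule isom_id)
  have "weq w (cat (rs w J) (rs w (fld w - J)))" using cat_compose[OF wo J i1 i2] weq_isom by blast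
  moreover have "wf_word (rs w J)" using wf_rs[OF wf] .
  moreover have "fld (rs w J) \<noteq> {}" using fld_rs[OF wo Js] ne1 by simp
  moreover have "fld (rs w (fld w - J)) \<noteq> {}" using fld_rs[OF wo, of "fld w - J"] ne2 by auto
  ultimately show ?thesis unfolding proper_suffix_def by blast
qed

lemma le_lex_le: fixes x y :: "(nat,'a::linorder) wd"
  shows "wf_word x \<Longrightarrow> wf_word y \<Longrightarrow> le_lex x y \<longleftrightarrow> le x y"
  using le_lex_iff le_def by blast

lemma lt_lex_lt: fixes x y :: "(nat,'a::linorder) wd"
  shows "wf_word x \<Longrightarrow> wf_word y \<Longrightarrow> lt_lex x y \<longleftrightarrow> lt x y"
  using le_lex_le lt_lex_def lt_def by blast

lemma prime_suffix: fixes p r :: "(nat,'a::linorder) wd"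
  assumes pp: "prime_word p" and wr: "wf_word r" and e: "weq p r" and J: "ofilter (fst r) J"
    and ne1: "J \<noteq> {}" and ne2: "fld r - J \<noteq> {}"
  shows "le p (rs r (fld r - J))"
proof -
  have wfp: "wf_word p" using pp unfolding prime_word_def by blast
  have wop: "WO p" using wfp unfolding wf_word_def by blast
  have wor: "WO r" using wr unfolding wf_word_def by blast
  obtain g where g: "isom r p g" using weq_sym[OF e] weq_isom by blast
  have g': "isom (rs r (fld r)) (rs p (fld p)) g" using g by simp
  have Js: "J \<subseteq> fld r" using ofilter_sub[OF J] .
  have t1: "ofilter (fst p) (g ` J)" using transport(1)[OF wor wop ofilter_fld[OF wor] ofilter_fld[OF wop] g' J Js] .
  have gb: "bij_betw g (fld r) (fld p)" using isomD1[OF g] .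
  have c1: "g ` J \<noteq> {}" using ne1 by blast
  have im: "g ` (fld r - J) = fld p - g ` J"
  proof -
    have ij: "inj_on g (fld r)" using gb by (simp add: bij_betw_def)
    have "g ` (fld r - J) = g ` fld r - g ` J" using inj_on_image_set_diff[OF ij _ Js] by blast
    then show ?thesis using gb by (simp add: bij_betw_def)
  qed
  have c2: "fld p - g ` J \<noteq> {}" using ne2 im by blast
  have ps: "proper_suffix (rs p (fld p - g ` J)) p" using suffix_rs[OF wfp t1 c1 c2] .
  have "le_lex p (rs p (fld p - g ` J))" using pp ps wf_rs[OF wfp] unfolding prime_word_def by blast
  then have l1: "le p (rs p (fld p - g ` J))" using le_lex_le wfp wf_rs[OF wfp] by blast
  have "isom (rs r (fld r - J)) (rs p (g ` (fld r - J))) g" using isom_rs[OF wor wop g] by blast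
  then have "weq (rs p (fld p - g ` J)) (rs r (fld r - J))" using im weq_isom weq_sym by metis
  then show ?thesis using le_weq_right[OF wop WO_rs[OF wop] WO_rs[OF wor] l1] by blast
qed

lemma proper_ordLess: assumes wx: "WO x" and wy: "WO y" and p: "pre x y" and n: "\<not> weq x y"
  shows "(fst x, fst y) \<in> ordLess"
proof -
  obtain B where B: "ofilter (fst y) B" "weq x (rs y B)" using p unfolding pre_def by blast
  have "B \<noteq> fld y" using B(2) n by auto
  then have Bl: "B < fld y" using ofilter_sub[OF B(1)] by blast
  have l1: "(Restr (fst y) B, fst y) \<in> ordLess" using ofilter_ordLess[OF wy B(1)] Bl by blast
  obtain g where g: "isom x (rs y B) g" using B(2) weq_isom by blast
  have "iso (fst x) (Restr (fst y) B) g" unfolding iso_iff2 using isomD1[OF g] isomD2[OF g] by simp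
  then have "(fst x, Restr (fst y) B) \<in> ordIso" unfolding ordIso_def using wx wy Well_order_Restr by blast
  then show ?thesis using l1 ordIso_ordLess_trans by blast
qed


lemma fld_wprod: assumes wos: "Well_order s" and wu: "\<And>b. b \<in> Field s \<Longrightarrow> WO (u b)"
  shows "fld (wprod s u) = {(b,p). b \<in> Field s \<and> p \<in> fld (u b)}"
proof
  show "fld (wprod s u) \<subseteq> {(b,p). b \<in> Field s \<and> p \<in> fld (u b)}"
    unfolding wprod_def Field_def by auto
next
  show "{(b,p). b \<in> Field s \<and> p \<in> fld (u b)} \<subseteq> fld (wprod s u)"
  proof
    fix c assume "c \<in> {(b,p). b \<in> Field s \<and> p \<in> fld (u b)}"
    then obtain b p where c: "c = (b,p)" "b \<in> Field s" "p \<in> fld (u b)" by blast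
    have "(p,p) \<in> fst (u b)" using WO_refl_pt[OF wu[OF c(2)] c(3)] .
    then have "((b,p),(b,p)) \<in> fst (wprod s u)" unfolding wprod_def using c by auto
    then show "c \<in> fld (wprod s u)" using c(1) by (auto intro: FieldI1)
  qed
qed

lemma rel_wprod: "((b,p),(b',p')) \<in> fst (wprod s u) \<longleftrightarrow> b \<in> Field s \<and> b' \<in> Field s
   \<and> p \<in> fld (u b) \<and> p' \<in> fld (u b') \<and> ((b \<noteq> b' \<and> (b,b') \<in> s) \<or> (b = b' \<and> (p,p') \<in> fst (u b)))"
  unfolding wprod_def by auto

lemma snd_wprod: "snd (wprod s u) (b,p) = snd (u b) p" unfolding wprod_def by simp

locale fact =
  fixes x :: "(nat,'a::linorder) wd" and s :: "nat rel" and u :: "nat \<Rightarrow> (nat,'a) wd"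
    and phi :: "nat \<Rightarrow> nat \<times> nat"
  assumes wfx: "wf_word x" and wos: "Well_order s" and pr: "\<And>b. b \<in> Field s \<Longrightarrow> prime_word (u b)"
    and dn: "dense_nonincr s u" and phi: "isom x (wprod s u) phi"
begin

definition ix where "ix d = fst (phi d)"
definition ps where "ps d = snd (phi d)"
definition bl where "bl b = {d \<in> fld x. ix d = b}"
definition T where "T a = {d \<in> fld x. (a, ix d) \<in> s}"
definition seg where "seg a I = T a \<inter> I"

lemma wox: "WO x" using wfx unfolding wf_word_def by blast
lemma wfu: "b \<in> Field s \<Longrightarrow> wf_word (u b)" using pr unfolding prime_word_def by blast
lemma wou: "b \<in> Field s \<Longrightarrow> WO (u b)" using wfu unfolding wf_word_def by blast

lemma fldW: "fld (wprod s u) = {(b,p). b \<in> Field s \<and> p \<in> fld (u b)}"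
  by (rule fld_wprod[OF wos]) (rule wou)

lemma F1: assumes "d \<in> fld x" shows "ix d \<in> Field s" "ps d \<in> fld (u (ix d))"
proof -
  have "phi d \<in> fld (wprod s u)" using isom_in[OF phi assms] .
  then have "(ix d, ps d) \<in> {(b,p). b \<in> Field s \<and> p \<in> fld (u b)}" unfolding ix_def ps_def fldW by simp
  then show "ix d \<in> Field s" "ps d \<in> fld (u (ix d))" by auto
qed

lemma phi_eq: "phi d = (ix d, ps d)" unfolding ix_def ps_def by simp

lemma F2: assumes "d \<in> fld x" "d' \<in> fld x"
  shows "(d,d') \<in> fst x \<longleftrightarrow> (ix d \<noteq> ix d' \<and> (ix d, ix d') \<in> s) \<or> (ix d = ix d' \<and> (ps d, ps d') \<in> fst (u (ix d)))"
proof -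
  have "(d,d') \<in> fst x \<longleftrightarrow> (phi d, phi d') \<in> fst (wprod s u)" using isomD2[OF phi assms] .
  also have "\<dots> \<longleftrightarrow> ((ix d, ps d), (ix d', ps d')) \<in> fst (wprod s u)" by (simp add: phi_eq)
  also have "\<dots> \<longleftrightarrow> (ix d \<noteq> ix d' \<and> (ix d, ix d') \<in> s) \<or> (ix d = ix d' \<and> (ps d, ps d') \<in> fst (u (ix d)))"
    unfolding rel_wprod using F1[OF assms(1)] F1[OF assms(2)] by auto
  finally show ?thesis .
qed

lemma F3: assumes "d \<in> fld x" shows "snd x d = snd (u (ix d)) (ps d)"
  using isomD3[OF phi assms] by (simp add: phi_eq snd_wprod)

lemma phi_inj: "inj_on phi (fld x)" using isomD1[OF phi] by (simp add: bij_betw_def)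

lemma phi_surj: assumes "b \<in> Field s" "p \<in> fld (u b)" shows "\<exists>d\<in>fld x. ix d = b \<and> ps d = p"
proof -
  have "(b,p) \<in> fld (wprod s u)" using assms fldW by simp
  then have "(b,p) \<in> phi ` fld x" using isomD1[OF phi] by (simp add: bij_betw_def)
  then obtain d where "d \<in> fld x" "phi d = (b,p)" by (metis imageE)
  then show ?thesis by (auto simp: phi_eq)
qed

lemma bl_sub: "bl b \<subseteq> fld x" unfolding bl_def by blast

lemma F4: assumes b: "b \<in> Field s" shows "isom (rs x (bl b)) (u b) ps"
proof (rule isomI)
  have f: "fld (rs x (bl b)) = bl b" using fld_rs[OF wox bl_sub] .
  show "bij_betw ps (fld (rs x (bl b))) (fld (u b))"
    unfolding f bij_betw_def
  proof
    show "inj_on ps (bl b)"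
    proof (rule inj_onI)
      fix d1 d2 assume d: "d1 \<in> bl b" "d2 \<in> bl b" "ps d1 = ps d2"
      then have "ix d1 = ix d2" using bl_def by simp
      then have "phi d1 = phi d2" using d(3) by (simp add: phi_eq)
      then show "d1 = d2" using inj_onD[OF phi_inj] d bl_sub by blast
    qed
  next
    show "ps ` bl b = fld (u b)"
    proof
      show "ps ` bl b \<subseteq> fld (u b)" using F1 bl_def by auto
    next
      show "fld (u b) \<subseteq> ps ` bl b"
      proof
        fix p assume "p \<in> fld (u b)"
        then obtain d where "d \<in> fld x" "ix d = b" "ps d = p" using phi_surj[OF b] by blast
        then show "p \<in> ps ` bl b" unfolding bl_def by blast
      qed
    qed
  qed
next
  fix d d' assume "d \<in> fld (rs x (bl b))" "d' \<in> fld (rs x (bl b))"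
  then have dd: "d \<in> bl b" "d' \<in> bl b" using fld_rs[OF wox bl_sub] by auto
  then have "d \<in> fld x" "d' \<in> fld x" "ix d = b" "ix d' = b" unfolding bl_def by auto
  then have "(d,d') \<in> fst x \<longleftrightarrow> (ps d, ps d') \<in> fst (u b)" using F2 by auto
  then show "(d, d') \<in> fst (rs x (bl b)) \<longleftrightarrow> (ps d, ps d') \<in> fst (u b)" using dd by auto
next
  fix d assume "d \<in> fld (rs x (bl b))"
  then have "d \<in> bl b" using fld_rs[OF wox bl_sub] by auto
  then show "snd (rs x (bl b)) d = snd (u b) (ps d)" using F3 bl_def by auto
qed

lemma weq_bl: "b \<in> Field s \<Longrightarrow> weq (rs x (bl b)) (u b)" using F4 weq_isom by blast

lemma F5: assumes b: "b \<in> Field s" shows "bl b \<noteq> {}"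
proof -
  have "fld (u b) \<noteq> {}" using prime_nonempty pr[OF b] by blast
  then obtain p where "p \<in> fld (u b)" by blast
  then obtain d where "d \<in> fld x" "ix d = b" using phi_surj[OF b] by blast
  then show ?thesis unfolding bl_def by blast
qed

lemma O1: assumes "d \<in> fld x" "d' \<in> fld x" "ix d \<noteq> ix d'"
  shows "(d,d') \<in> fst x \<longleftrightarrow> (ix d, ix d') \<in> s"
  using F2[OF assms(1,2)] assms(3) by auto

lemma O2: assumes "d \<in> fld x" "d' \<in> fld x" "(d,d') \<in> fst x" shows "(ix d, ix d') \<in> s"
proof (cases "ix d = ix d'")
  case True then show ?thesis using WO_refl_pt[OF wos] F1(1)[OF assms(1)] by simp
next
  case False then show ?thesis using O1 assms by blast
qed

lemma O3: assumes "d \<in> fld x" "d' \<in> fld x" "(ix d, ix d') \<in> s" "ix d \<noteq> ix d'"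
  shows "(d,d') \<in> fst x" "d \<noteq> d'"
  using O1 assms by auto

end


lemma Bchar: assumes wo: "WO x" and S: "S \<subseteq> fld x" and B: "ofilter (fst (rs x S)) B"
  and k: "minc (fst (rs x S)) B k"
  shows "B = {d \<in> S. (d,k) \<in> fst x \<and> d \<noteq> k}"
proof -
  have fS: "fld (rs x S) = S" using fld_rs[OF wo S] .
  have kS: "k \<in> S" "k \<notin> B" using minc_in[OF k] fS by auto
  have BS: "B \<subseteq> S" using ofilter_sub[OF B] fS by simp
  show ?thesis
  proof
    show "B \<subseteq> {d \<in> S. (d,k) \<in> fst x \<and> d \<noteq> k}"
    proof
      fix d assume d: "d \<in> B"
      have dS: "d \<in> S" using d BS by blast
      have "d \<noteq> k" using d kS by blast
      moreover have "(d,k) \<in> fst x"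
      proof (rule ccontr)
        assume "(d,k) \<notin> fst x"
        then have "(k,d) \<in> fst x" using WO_total[OF wo] S dS kS(1) by blast
        then have "(k,d) \<in> fst (rs x S)" using dS kS by simp
        then have "k \<in> B" using ofilter_down[OF B d] by blast
        then show False using kS by blast
      qed
      ultimately show "d \<in> {d \<in> S. (d,k) \<in> fst x \<and> d \<noteq> k}" using dS by blast
    qed
  next
    show "{d \<in> S. (d,k) \<in> fst x \<and> d \<noteq> k} \<subseteq> B"
    proof
      fix d assume d: "d \<in> {d \<in> S. (d,k) \<in> fst x \<and> d \<noteq> k}"
      show "d \<in> B"
      proof (rule ccontr)
        assume "d \<notin> B"
        then have "(k,d) \<in> fst (rs x S)" using k d fS unfolding minc_def by blast
        then have "(k,d) \<in> fst x" by simp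
        then show False using d WO_antisym[OF wo] by blast
      qed
    qed
  qed
qed

context fact
begin

definition Lt where "Lt g = {d \<in> fld x. (ix d, g) \<in> s \<and> ix d \<noteq> g}"
definition und where "und k = {d \<in> fld x. (d,k) \<in> fst x}"

lemma sT: "T a \<subseteq> fld x" unfolding T_def by blast
lemma sseg: "seg a I \<subseteq> fld x" unfolding seg_def T_def by blast

lemma of_Lt: "ofilter (fst x) (Lt g)"
proof (rule ofilterI)
  show "Lt g \<subseteq> fld x" unfolding Lt_def by blast
next
  fix a b assume a: "a \<in> Lt g" and ba: "(b,a) \<in> fst x"
  have af: "a \<in> fld x" and ag: "(ix a, g) \<in> s" "ix a \<noteq> g" using a Lt_def by auto
  have bf: "b \<in> fld x" using ba by (simp add: FieldI1)
  have "(ix b, ix a) \<in> s" using O2[OF bf af ba] .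
  then have bg: "(ix b, g) \<in> s" using WO_trans[OF wos _ ag(1)] by blast
  have "ix b \<noteq> g"
  proof
    assume "ix b = g"
    then have "ix a = g" using WO_antisym[OF wos ag(1)] \<open>(ix b, ix a) \<in> s\<close> by simp
    then show False using ag(2) by simp
  qed
  then show "b \<in> Lt g" using bf bg Lt_def by blast
qed

lemma of_und: "ofilter (fst x) (und k)"
proof (rule ofilterI)
  show "und k \<subseteq> fld x" unfolding und_def by blast
next
  fix a b assume a: "a \<in> und k" and ba: "(b,a) \<in> fst x"
  have "(a,k) \<in> fst x" using a und_def by blast
  then have "(b,k) \<in> fst x" using WO_trans[OF wox ba] by blast
  then show "b \<in> und k" using und_def ba by (auto intro: FieldI1)
qed

lemma in_T: "d \<in> fld x \<Longrightarrow> (a, ix d) \<in> s \<Longrightarrow> d \<in> T a" unfolding T_def by blast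

lemma bl_T: "a \<in> Field s \<Longrightarrow> bl a \<subseteq> T a"
  unfolding bl_def T_def using WO_refl_pt[OF wos] by blast

lemma ix_bl: "d \<in> bl a \<Longrightarrow> ix d = a" unfolding bl_def by blast
lemma fld_bl: "d \<in> bl a \<Longrightarrow> d \<in> fld x" unfolding bl_def by blast
lemma in_bl: "d \<in> fld x \<Longrightarrow> d \<in> bl (ix d)" unfolding bl_def by blast

lemma wf_rsx: "wf_word (rs x S)" using wf_rs[OF wfx] .
lemma wo_rsx: "WO (rs x S)" using WO_rs[OF wox] .

lemma dense_first:
  assumes sg: "\<sigma> \<in> Field s" and dl: "\<delta> \<in> Field s" and sd: "(\<sigma>,\<delta>) \<in> s"
    and nw: "\<not> weq (u \<delta>) (u \<sigma>)"
    and pre_eq: "\<And>\<beta>. \<beta> \<in> Field s \<Longrightarrow> (\<sigma>,\<beta>) \<in> s \<Longrightarrow> (\<beta>,\<delta>) \<in> s \<Longrightarrow> \<beta> \<noteq> \<delta> \<Longrightarrow> weq (u \<beta>) (u \<sigma>)"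
  shows "lt (u \<delta>) (u \<sigma>)"
proof -
  define H where "H = {h \<in> Field s. (\<delta>,h) \<in> s \<and> \<delta> \<noteq> h}"
  define g' where "g' = (if H = {} then None else Some (SOME h. h \<in> H \<and> (\<forall>h'\<in>H. (h,h') \<in> s)))"
  have bb: "\<And>b. b \<in> Field s \<Longrightarrow> below_bound s g' b \<longleftrightarrow> (b,\<delta>) \<in> s"
  proof -
    fix b assume b: "b \<in> Field s"
    show "below_bound s g' b \<longleftrightarrow> (b,\<delta>) \<in> s"
    proof (cases "H = {}")
      case True
      have "(b,\<delta>) \<in> s"
      proof (rule ccontr)
        assume n: "(b,\<delta>) \<notin> s"
        then have "(\<delta>,b) \<in> s" using WO_total[OF wos b dl] by blast
        moreover have "\<delta> \<noteq> b" using n WO_refl_pt[OF wos dl] by blast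
        ultimately have "b \<in> H" using b H_def by blast
        then show False using True by blast
      qed
      moreover have "g' = None" using True g'_def by simp
      ultimately show ?thesis by (simp add: below_bound_def)
    next
      case False
      have "\<exists>h\<in>H. \<forall>h'\<in>H. (h,h') \<in> s" using wo_min[OF wos _ False] H_def by blast
      then have hs: "(SOME h. h \<in> H \<and> (\<forall>h'\<in>H. (h,h') \<in> s)) \<in> H \<and>
          (\<forall>h'\<in>H. ((SOME h. h \<in> H \<and> (\<forall>h'\<in>H. (h,h') \<in> s)), h') \<in> s)"
        by (rule someI2_bex) blast
      define h where "h = (SOME h. h \<in> H \<and> (\<forall>h'\<in>H. (h,h') \<in> s))"
      have h: "h \<in> H" "\<forall>h'\<in>H. (h,h') \<in> s" using hs h_def by auto
      have g'h: "g' = Some h" using False g'_def h_def by simp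
      have hH: "h \<in> Field s" "(\<delta>,h) \<in> s" "\<delta> \<noteq> h" using h(1) H_def by auto
      show ?thesis
      proof
        assume "below_bound s g' b"
        then have bh: "(b,h) \<in> s" "b \<noteq> h" using g'h by (auto simp: below_bound_def)
        show "(b,\<delta>) \<in> s"
        proof (rule ccontr)
          assume "(b,\<delta>) \<notin> s"
          then have "(\<delta>,b) \<in> s" "\<delta> \<noteq> b" using WO_total[OF wos b dl] WO_refl_pt[OF wos dl] by auto
          then have "b \<in> H" using b H_def by blast
          then have "(h,b) \<in> s" using h(2) by blast
          then show False using WO_antisym[OF wos bh(1)] bh(2) by blast
        qed
      next
        assume bd: "(b,\<delta>) \<in> s"
        have "(b,h) \<in> s" using WO_trans[OF wos bd hH(2)] .
        moreover have "b \<noteq> h"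
        proof
          assume "b = h"
          then have "\<delta> = h" using WO_antisym[OF wos hH(2)] bd by simp
          then show False using hH(3) by simp
        qed
        ultimately show "below_bound s g' b" using g'h by (simp add: below_bound_def)
      qed
    qed
  qed
  have g'ok: "case g' of None \<Rightarrow> True | Some h \<Rightarrow> h \<in> Field s \<and> (\<sigma>, h) \<in> s \<and> \<sigma> \<noteq> h"
  proof (cases "H = {}")
    case True then show ?thesis using g'_def by simp
  next
    case False
    have "\<exists>h\<in>H. \<forall>h'\<in>H. (h,h') \<in> s" using wo_min[OF wos _ False] H_def by blast
    then have hs: "(SOME h. h \<in> H \<and> (\<forall>h'\<in>H. (h,h') \<in> s)) \<in> H"
      by (rule someI2_bex) blast
    define h where "h = (SOME h. h \<in> H \<and> (\<forall>h'\<in>H. (h,h') \<in> s))"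
    have hH: "h \<in> Field s" "(\<delta>,h) \<in> s" "\<delta> \<noteq> h" using hs h_def H_def by auto
    have "(\<sigma>,h) \<in> s" using WO_trans[OF wos sd hH(2)] .
    moreover have "\<sigma> \<noteq> h"
    proof
      assume "\<sigma> = h"
      then have "\<delta> = h" using WO_antisym[OF wos sd] hH(2) by simp
      then show False using hH(3) by simp
    qed
    ultimately show ?thesis using hH(1) False g'_def h_def by simp
  qed
  have D: "(\<forall>b \<in> Field s. (\<sigma>, b) \<in> s \<and> below_bound s g' b \<longrightarrow> weq (u b) (u \<sigma>))
       \<or> (\<exists>b \<in> Field s. \<exists>b' \<in> Field s. (\<sigma>, b) \<in> s \<and> (b, b') \<in> s \<and> b \<noteq> b'
            \<and> below_bound s g' b' \<and> lt_lex (u b') (u b))"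
    using dn sg g'ok unfolding dense_nonincr_def by blast
  have "\<not> (\<forall>b \<in> Field s. (\<sigma>, b) \<in> s \<and> below_bound s g' b \<longrightarrow> weq (u b) (u \<sigma>))"
    using dl sd bb[OF dl] WO_refl_pt[OF wos dl] nw by blast
  then obtain b b' where b: "b \<in> Field s" "b' \<in> Field s" "(\<sigma>, b) \<in> s" "(b, b') \<in> s" "b \<noteq> b'"
      "below_bound s g' b'" "lt_lex (u b') (u b)" using D by blast
  have b'd: "(b',\<delta>) \<in> s" using bb[OF b(2)] b(6) by blast
  have bd: "(b,\<delta>) \<in> s" using WO_trans[OF wos b(4) b'd] .
  have bnd: "b \<noteq> \<delta>"
  proof
    assume "b = \<delta>"
    then have "b = b'" using WO_antisym[OF wos b(4)] b'd by simp
    then show False using b(5) by simp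
  qed
  have wb: "weq (u b) (u \<sigma>)" using pre_eq[OF b(1) b(3) bd bnd] .
  have ltb: "lt (u b') (u b)" using lt_lex_lt wfu b(1,2) b(7) by blast
  have sb': "(\<sigma>,b') \<in> s" using WO_trans[OF wos b(3) b(4)] .
  have "b' = \<delta>"
  proof (rule ccontr)
    assume "b' \<noteq> \<delta>"
    then have "weq (u b') (u \<sigma>)" using pre_eq[OF b(2) sb' b'd] by blast
    then have "weq (u b') (u b)" using wb weq_sym weq_trans by blast
    then show False using ltb unfolding lt_def by blast
  qed
  then have "lt (u \<delta>) (u b)" using ltb by simp
  then show ?thesis using lt_le_trans[OF wou[OF dl] wou[OF b(1)] wou[OF sg]] weq_le[OF wb wou[OF sg]] by blast
qed


lemma power_iso:
  assumes Jx: "Jx \<subseteq> Field s" and wy: "WO y" and eq: "\<And>g. g \<in> Jx \<Longrightarrow> weq (u g) y"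
  shows "weq (rs x {d \<in> fld x. ix d \<in> Jx}) (wprod (Restr s Jx) (\<lambda>_. y))"
proof -
  define psi where "psi g = (SOME f. isom (u g) y f)" for g
  have psi: "\<And>g. g \<in> Jx \<Longrightarrow> isom (u g) y (psi g)"
    unfolding psi_def using eq weq_isom by (metis someI_ex)
  define E where "E = {d \<in> fld x. ix d \<in> Jx}"
  have Es: "E \<subseteq> fld x" unfolding E_def by blast
  have fE: "fld (rs x E) = E" using fld_rs[OF wox Es] .
  have FJ: "Field (Restr s Jx) = Jx" using Field_Restr_refl[OF WO_refl[OF wos] Jx] .
  have wR: "Well_order (Restr s Jx)" using Well_order_Restr[OF wos] .
  have fW: "fld (wprod (Restr s Jx) (\<lambda>_. y)) = {(b,p). b \<in> Jx \<and> p \<in> fld y}"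
    using fld_wprod[OF wR, of "\<lambda>_. y"] wy FJ by simp
  define h where "h d = (ix d, psi (ix d) (ps d))" for d
  have hE: "\<And>d. d \<in> E \<Longrightarrow> ix d \<in> Jx \<and> ps d \<in> fld (u (ix d)) \<and> psi (ix d) (ps d) \<in> fld y"
  proof -
    fix d assume d: "d \<in> E"
    then have "d \<in> fld x" "ix d \<in> Jx" unfolding E_def by auto
    moreover have "ps d \<in> fld (u (ix d))" using F1(2)[OF \<open>d \<in> fld x\<close>] .
    moreover have "psi (ix d) (ps d) \<in> fld y" using isom_in[OF psi[OF \<open>ix d \<in> Jx\<close>]] calculation by blast
    ultimately show "ix d \<in> Jx \<and> ps d \<in> fld (u (ix d)) \<and> psi (ix d) (ps d) \<in> fld y" by blast
  qed
  show ?thesis unfolding E_def[symmetric] weq_isom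
  proof (rule exI[of _ h], rule isomI)
    show "bij_betw h (fld (rs x E)) (fld (wprod (Restr s Jx) (\<lambda>_. y)))"
      unfolding fE fW bij_betw_def
    proof
      show "inj_on h E"
      proof (rule inj_onI)
        fix d1 d2 assume d1: "d1 \<in> E" and d2: "d2 \<in> E" and e: "h d1 = h d2"
        have i: "ix d1 = ix d2" using e h_def by simp
        have "psi (ix d1) (ps d1) = psi (ix d1) (ps d2)" using e i h_def by simp
        moreover have "inj_on (psi (ix d1)) (fld (u (ix d1)))"
          using isomD1[OF psi] hE[OF d1] by (simp add: bij_betw_def)
        ultimately have "ps d1 = ps d2" using hE[OF d1] hE[OF d2] i inj_onD by metis
        then have "phi d1 = phi d2" using i by (simp add: phi_eq)
        then show "d1 = d2" using inj_onD[OF phi_inj] d1 d2 Es by blast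
      qed
    next
      show "h ` E = {(b,p). b \<in> Jx \<and> p \<in> fld y}"
      proof
        show "h ` E \<subseteq> {(b,p). b \<in> Jx \<and> p \<in> fld y}" using hE h_def by auto
      next
        show "{(b,p). b \<in> Jx \<and> p \<in> fld y} \<subseteq> h ` E"
        proof
          fix c assume "c \<in> {(b,p). b \<in> Jx \<and> p \<in> fld y}"
          then obtain b q where c: "c = (b,q)" "b \<in> Jx" "q \<in> fld y" by blast
          have "q \<in> psi b ` fld (u b)" using isomD1[OF psi[OF c(2)]] c(3) by (simp add: bij_betw_def)
          then obtain p0 where p0: "p0 \<in> fld (u b)" "q = psi b p0" by blast
          obtain d where d: "d \<in> fld x" "ix d = b" "ps d = p0" using phi_surj[OF _ p0(1)] c(2) Jx by blast
          have "d \<in> E" using d c(2) E_def by blast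
          moreover have "h d = c" using d p0 c h_def by simp
          ultimately show "c \<in> h ` E" by blast
        qed
      qed
    qed
  next
    fix d d' assume "d \<in> fld (rs x E)" "d' \<in> fld (rs x E)"
    then have dd: "d \<in> E" "d' \<in> E" using fE by auto
    have df: "d \<in> fld x" "d' \<in> fld x" using dd Es by auto
    have "(d,d') \<in> fst x \<longleftrightarrow> (ix d \<noteq> ix d' \<and> (ix d, ix d') \<in> s) \<or> (ix d = ix d' \<and> (ps d, ps d') \<in> fst (u (ix d)))"
      using F2[OF df] .
    also have "\<dots> \<longleftrightarrow> (h d, h d') \<in> fst (wprod (Restr s Jx) (\<lambda>_. y))"
    proof -
      have a: "ix d = ix d' \<Longrightarrow> (ps d, ps d') \<in> fst (u (ix d)) \<longleftrightarrow> (psi (ix d) (ps d), psi (ix d) (ps d')) \<in> fst y"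
        using isomD2[OF psi] hE[OF dd(1)] hE[OF dd(2)] by metis
      show ?thesis unfolding h_def rel_wprod FJ using hE[OF dd(1)] hE[OF dd(2)] a by auto
    qed
    finally show "(d, d') \<in> fst (rs x E) \<longleftrightarrow> (h d, h d') \<in> fst (wprod (Restr s Jx) (\<lambda>_. y))"
      using dd by auto
  next
    fix d assume "d \<in> fld (rs x E)"
    then have d: "d \<in> E" using fE by auto
    have "snd x d = snd (u (ix d)) (ps d)" using F3 d Es by blast
    also have "\<dots> = snd y (psi (ix d) (ps d))" using isomD3[OF psi] hE[OF d] by blast
    finally show "snd (rs x E) d = snd (wprod (Restr s Jx) (\<lambda>_. y)) (h d)" by (simp add: h_def snd_wprod)
  qed
qed

end


context fact
begin

lemma H1: assumes "\<sigma> \<in> Field s" "bl \<sigma> \<subseteq> seg \<sigma> I" shows "ofilter (fst (rs x (seg \<sigma> I))) (bl \<sigma>)"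
proof (rule ofilter_rsI[OF wox sseg assms(2)])
  fix d d' assume d: "d \<in> bl \<sigma>" and d': "d' \<in> seg \<sigma> I" and dd: "(d',d) \<in> fst x"
  have df: "d \<in> fld x" using fld_bl[OF d] .
  have d'f: "d' \<in> fld x" using d' sseg by blast
  have "(ix d', \<sigma>) \<in> s" using O2[OF d'f df dd] ix_bl[OF d] by simp
  moreover have "(\<sigma>, ix d') \<in> s" using d' unfolding seg_def T_def by blast
  ultimately have "ix d' = \<sigma>" using WO_antisym[OF wos] by blast
  then show "d' \<in> bl \<sigma>" using in_bl[OF d'f] by simp
qed

lemma H2: assumes I: "ofilter (fst x) I" and d: "d \<in> seg \<sigma> I" and sg: "(\<sigma>,\<gamma>) \<in> s"
  and gd: "(\<gamma>, ix d) \<in> s" and ne: "\<gamma> \<noteq> ix d"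
  shows "bl \<gamma> \<subseteq> seg \<sigma> I"
proof
  fix e assume e: "e \<in> bl \<gamma>"
  have ef: "e \<in> fld x" using fld_bl[OF e] .
  have df: "d \<in> fld x" using d sseg by blast
  have eT: "e \<in> T \<sigma>" using in_T[OF ef] sg ix_bl[OF e] by simp
  have "(e,d) \<in> fst x" using O3(1)[OF ef df] ix_bl[OF e] gd ne by simp
  then have "e \<in> I" using ofilter_down[OF I] d unfolding seg_def by blast
  then show "e \<in> seg \<sigma> I" using eT seg_def by blast
qed

lemma H3: assumes dl: "\<delta> \<in> Field s" and sd: "(\<sigma>,\<delta>) \<in> s" shows "seg \<sigma> I - Lt \<delta> = seg \<delta> I"
proof
  show "seg \<sigma> I - Lt \<delta> \<subseteq> seg \<delta> I"
  proof
    fix d assume d: "d \<in> seg \<sigma> I - Lt \<delta>"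
    have df: "d \<in> fld x" using d sseg by blast
    have nl: "\<not> ((ix d, \<delta>) \<in> s \<and> ix d \<noteq> \<delta>)" using d df Lt_def by blast
    have "(\<delta>, ix d) \<in> s"
    proof (cases "ix d = \<delta>")
      case True then show ?thesis using WO_refl_pt[OF wos dl] by simp
    next
      case False then show ?thesis using nl WO_total[OF wos dl F1(1)[OF df]] by blast
    qed
    then show "d \<in> seg \<delta> I" using d df unfolding seg_def T_def by blast
  qed
next
  show "seg \<delta> I \<subseteq> seg \<sigma> I - Lt \<delta>"
  proof
    fix d assume d: "d \<in> seg \<delta> I"
    have df: "d \<in> fld x" using d sseg by blast
    have di: "(\<delta>, ix d) \<in> s" using d unfolding seg_def T_def by blast
    have "(\<sigma>, ix d) \<in> s" using WO_trans[OF wos sd di] .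
    moreover have "d \<notin> Lt \<delta>" using di WO_antisym[OF wos] Lt_def by blast
    ultimately show "d \<in> seg \<sigma> I - Lt \<delta>" using d df unfolding seg_def T_def by blast
  qed
qed

lemma H4: assumes S: "S \<subseteq> fld x" shows "ofilter (fst (rs x S)) (S \<inter> Lt \<gamma>)"
proof (rule ofilter_rsI[OF wox S])
  show "S \<inter> Lt \<gamma> \<subseteq> S" by blast
next
  fix d d' assume "d \<in> S \<inter> Lt \<gamma>" "d' \<in> S" "(d',d) \<in> fst x"
  then show "d' \<in> S \<inter> Lt \<gamma>" using ofilter_down[OF of_Lt] by blast
qed

lemma H6: assumes I: "ofilter (fst x) I'" shows "ofilter (fst (rs x (bl \<gamma>))) (bl \<gamma> \<inter> I')"
proof (rule ofilter_rsI[OF wox bl_sub])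
  show "bl \<gamma> \<inter> I' \<subseteq> bl \<gamma>" by blast
next
  fix d d' assume "d \<in> bl \<gamma> \<inter> I'" "d' \<in> bl \<gamma>" "(d',d) \<in> fst x"
  then show "d' \<in> bl \<gamma> \<inter> I'" using ofilter_down[OF I] by blast
qed

lemma H7: assumes "(\<sigma>,\<gamma>) \<in> s" shows "bl \<gamma> \<inter> seg \<sigma> I = bl \<gamma> \<inter> I"
  using assms unfolding seg_def T_def bl_def by auto

lemma H8: assumes I: "ofilter (fst x) I" and gs: "\<gamma> \<in> Field s" and sg: "(\<sigma>,\<gamma>) \<in> s"
  and nsub: "\<not> bl \<gamma> \<subseteq> seg \<sigma> I"
  shows "seg \<sigma> I - Lt \<gamma> = bl \<gamma> \<inter> seg \<sigma> I"
proof
  show "seg \<sigma> I - Lt \<gamma> \<subseteq> bl \<gamma> \<inter> seg \<sigma> I"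
  proof
    fix d assume d: "d \<in> seg \<sigma> I - Lt \<gamma>"
    have df: "d \<in> fld x" using d sseg by blast
    have nl: "\<not> ((ix d, \<gamma>) \<in> s \<and> ix d \<noteq> \<gamma>)" using d df Lt_def by blast
    have "ix d = \<gamma>"
    proof (rule ccontr)
      assume n: "ix d \<noteq> \<gamma>"
      then have "(\<gamma>, ix d) \<in> s" using nl WO_total[OF wos gs F1(1)[OF df]] by blast
      then have "bl \<gamma> \<subseteq> seg \<sigma> I" using H2[OF I _ sg] d n by blast
      then show False using nsub by blast
    qed
    then show "d \<in> bl \<gamma> \<inter> seg \<sigma> I" using d in_bl[OF df] by auto
  qed
next
  show "bl \<gamma> \<inter> seg \<sigma> I \<subseteq> seg \<sigma> I - Lt \<gamma>" using Lt_def ix_bl by auto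
qed

lemma H9: assumes "(\<sigma>,\<gamma>) \<in> s" "\<sigma> \<noteq> \<gamma>" shows "bl \<sigma> \<inter> S \<subseteq> S \<inter> Lt \<gamma>"
  using assms unfolding Lt_def bl_def by auto

lemma rs_diff: assumes "S \<subseteq> fld x" shows "rs (rs x S) (fld (rs x S) - P) = rs x (S - P)"
proof -
  have "fld (rs x S) = S" using fld_rs[OF wox assms] .
  moreover have "S \<inter> (S - P) = S - P" by blast
  ultimately show ?thesis by (simp add: rs_rs)
qed

lemma rs_sub: assumes "P \<subseteq> S" shows "rs (rs x S) P = rs x P"
proof -
  have "S \<inter> P = P" using assms by blast
  then show ?thesis by (simp add: rs_rs)
qed

end


context fact
begin

lemma K_step:
  assumes IH: "\<And>(p' :: (nat,'a) wd) \<sigma>' I'. wf_word p' \<Longrightarrow> prime_word p' \<Longrightarrow> (fst p', fst p) \<in> ordLess \<Longrightarrow> \<sigma>' \<in> Field s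
      \<Longrightarrow> pre (u \<sigma>') p' \<Longrightarrow> \<not> weq (u \<sigma>') p' \<Longrightarrow> ofilter (fst x) I' \<Longrightarrow> le (rs x (seg \<sigma>' I')) p'"
    and wfp: "wf_word (p :: (nat,'a) wd)" and pp: "prime_word p" and sg: "\<sigma> \<in> Field s" and I: "ofilter (fst x) I"
    and sub: "bl \<sigma> \<subseteq> seg \<sigma> I" and ne: "bl \<sigma> \<noteq> seg \<sigma> I" and e: "weq p (rs x (seg \<sigma> I))"
  shows False
proof -
  define S where "S = seg \<sigma> I"
  have Ss: "S \<subseteq> fld x" using sseg S_def by simp
  have wop: "WO p" using wfp unfolding wf_word_def by blast
  have woS: "WO (rs x S)" by (rule wo_rsx)
  have wfS: "wf_word (rs x S)" by (rule wf_rsx)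
  have fS: "fld (rs x S) = S" using fld_rs[OF wox Ss] .
  have eS: "weq p (rs x S)" using e S_def by simp
  have bof: "ofilter (fst (rs x S)) (bl \<sigma>)" using H1[OF sg sub] S_def by simp
  have wu: "WO (u \<sigma>)" using wou[OF sg] .
  have pre1: "pre (u \<sigma>) p"
  proof -
    have "pre (rs x (bl \<sigma>)) (rs x S)" using pre_rs[OF wox Ss bof] .
    then have "pre (u \<sigma>) (rs x S)" using pre_weq_left weq_sym[OF weq_bl[OF sg]] by blast
    then show ?thesis using pre_weq_right[OF woS wop _ weq_sym[OF eS]] by blast
  qed
  have nw1: "\<not> weq (u \<sigma>) p"
  proof
    assume a: "weq (u \<sigma>) p"
    have "weq (rs x (bl \<sigma>)) (rs x S)" using weq_trans[OF weq_trans[OF weq_bl[OF sg] a] eS] .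
    then show False using proper_rs[OF wox Ss bof] ne S_def by blast
  qed
  have ordl: "(fst (u \<sigma>), fst p) \<in> ordLess" using proper_ordLess[OF wu wop pre1 nw1] .
  have lesp: "le (u \<sigma>) p" using pre_le[OF pre1] .
  have ltsp: "lt (u \<sigma>) p" using lesp nw1 unfolding lt_def by blast
  have IHs: "\<And>\<sigma>' I'. \<sigma>' \<in> Field s \<Longrightarrow> pre (u \<sigma>') (u \<sigma>) \<Longrightarrow> \<not> weq (u \<sigma>') (u \<sigma>) \<Longrightarrow> ofilter (fst x) I'
      \<Longrightarrow> le (rs x (seg \<sigma>' I')) (u \<sigma>)"
    using IH[OF wfu[OF sg] pr[OF sg] ordl] by blast
  have suff: "\<And>P. ofilter (fst (rs x S)) P \<Longrightarrow> P \<noteq> {} \<Longrightarrow> S - P \<noteq> {} \<Longrightarrow> le p (rs x (S - P))"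
  proof -
    fix P assume P: "ofilter (fst (rs x S)) P" "P \<noteq> {}" "S - P \<noteq> {}"
    have "fld (rs x S) - P \<noteq> {}" using P(3) fS by simp
    then have "le p (rs (rs x S) (fld (rs x S) - P))" using prime_suffix[OF pp wfS eS P(1) P(2)] by blast
    then show "le p (rs x (S - P))" using rs_diff[OF Ss] by simp
  qed
  define J' where "J' = {\<gamma> \<in> Field s. (\<sigma>,\<gamma>) \<in> s \<and> \<gamma> \<noteq> \<sigma> \<and> bl \<gamma> \<inter> S \<noteq> {}}"
  define Dd where "Dd = {\<gamma> \<in> J'. \<not> weq (u \<gamma>) (u \<sigma>)}"
  have J'ne: "J' \<noteq> {}"
  proof -
    obtain d where d: "d \<in> S" "d \<notin> bl \<sigma>" using sub ne S_def by blast
    have df: "d \<in> fld x" using d Ss by blast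
    have "ix d \<in> Field s" using F1(1)[OF df] .
    moreover have "(\<sigma>, ix d) \<in> s" using d S_def unfolding seg_def T_def by blast
    moreover have "ix d \<noteq> \<sigma>" using d(2) in_bl[OF df] by auto
    moreover have "d \<in> bl (ix d) \<inter> S" using in_bl[OF df] d by blast
    ultimately show ?thesis unfolding J'_def by blast
  qed
  show False
  proof (cases "Dd = {}")
    case True
    then have allw: "\<And>\<gamma>. \<gamma> \<in> J' \<Longrightarrow> weq (u \<gamma>) (u \<sigma>)" using Dd_def by blast
    show False
    proof (cases "\<forall>\<gamma> \<in> J'. bl \<gamma> \<subseteq> S")
      case True
      define Jx where "Jx = insert \<sigma> J'"
      have Jxs: "Jx \<subseteq> Field s" using Jx_def J'_def sg by blast
      have SE: "S = {d \<in> fld x. ix d \<in> Jx}"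
      proof
        show "S \<subseteq> {d \<in> fld x. ix d \<in> Jx}"
        proof
          fix d assume d: "d \<in> S"
          have df: "d \<in> fld x" using d Ss by blast
          show "d \<in> {d \<in> fld x. ix d \<in> Jx}"
          proof (cases "ix d = \<sigma>")
            case True then show ?thesis using df Jx_def by simp
          next
            case False
            have "(\<sigma>, ix d) \<in> s" using d S_def unfolding seg_def T_def by blast
            moreover have "d \<in> bl (ix d) \<inter> S" using in_bl[OF df] d by blast
            ultimately have "ix d \<in> J'" unfolding J'_def using F1(1)[OF df] False by blast
            then show ?thesis using df Jx_def by simp
          qed
        qed
      next
        show "{d \<in> fld x. ix d \<in> Jx} \<subseteq> S"
        proof
          fix d assume d: "d \<in> {d \<in> fld x. ix d \<in> Jx}"
          then have df: "d \<in> fld x" and dJ: "ix d \<in> Jx" by auto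
          have db: "d \<in> bl (ix d)" using in_bl[OF df] .
          show "d \<in> S"
          proof (cases "ix d = \<sigma>")
            case True then show ?thesis using db sub S_def by auto
          next
            case False
            then have "ix d \<in> J'" using dJ Jx_def by simp
            then show ?thesis using db True by blast
          qed
        qed
      qed
      have eqJ: "\<And>\<gamma>. \<gamma> \<in> Jx \<Longrightarrow> weq (u \<gamma>) (u \<sigma>)"
      proof -
        fix \<gamma> assume "\<gamma> \<in> Jx"
        then have "\<gamma> = \<sigma> \<or> \<gamma> \<in> J'" using Jx_def by blast
        then show "weq (u \<gamma>) (u \<sigma>)" using allw weq_refl[of "u \<sigma>"] by blast
      qed
      have "weq (rs x S) (wprod (Restr s Jx) (\<lambda>_. u \<sigma>))" using power_iso[OF Jxs wu eqJ] SE by simp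
      then have wp: "weq p (wprod (Restr s Jx) (\<lambda>_. u \<sigma>))" using weq_trans[OF eS] by blast
      have "primitive p" using pp unfolding prime_word_def by blast
      then have "\<exists>b. Field (Restr s Jx) = {b}"
        using wp Well_order_Restr[OF wos] wfu[OF sg] unfolding primitive_def by blast
      moreover have "Field (Restr s Jx) = Jx" using Field_Restr_refl[OF WO_refl[OF wos] Jxs] .
      moreover obtain \<gamma> where "\<gamma> \<in> J'" using J'ne by blast
      moreover have "\<gamma> \<noteq> \<sigma>" using \<open>\<gamma> \<in> J'\<close> J'_def by blast
      ultimately show False using Jx_def by auto
    next
      case False
      then obtain \<gamma> where \<gamma>: "\<gamma> \<in> J'" "\<not> bl \<gamma> \<subseteq> S" by blast
      have \<gamma>s: "\<gamma> \<in> Field s" "(\<sigma>,\<gamma>) \<in> s" "\<gamma> \<noteq> \<sigma>" "bl \<gamma> \<inter> S \<noteq> {}" using \<gamma>(1) J'_def by auto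
      define P where "P = S \<inter> Lt \<gamma>"
      have "S - P = S - Lt \<gamma>" unfolding P_def by blast
      then have SP: "S - P = bl \<gamma> \<inter> S" using H8[OF I \<gamma>s(1) \<gamma>s(2)] \<gamma>(2) S_def by simp
      have Pof: "ofilter (fst (rs x S)) P" using H4[OF Ss] P_def by simp
      have "bl \<sigma> \<subseteq> P" using H9[OF \<gamma>s(2)] \<gamma>s(3) sub S_def P_def by blast
      then have Pne: "P \<noteq> {}" using F5[OF sg] by blast
      have SPne: "S - P \<noteq> {}" using SP \<gamma>s(4) by simp
      have l1: "le p (rs x (S - P))" using suff[OF Pof Pne SPne] .
      have X: "bl \<gamma> \<inter> S = bl \<gamma> \<inter> I" using H7[OF \<gamma>s(2)] S_def by simp
      have Xof: "ofilter (fst (rs x (bl \<gamma>))) (bl \<gamma> \<inter> S)" using H6[OF I] X by simp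
      have Xne: "bl \<gamma> \<inter> S \<noteq> bl \<gamma>" using \<gamma>(2) by blast
      have lz: "lt (rs x (bl \<gamma> \<inter> S)) (rs x (bl \<gamma>))"
        using pre_le[OF pre_rs[OF wox bl_sub Xof]] proper_rs[OF wox bl_sub Xof Xne] unfolding lt_def by blast
      have "weq (rs x (bl \<gamma>)) (u \<sigma>)" using weq_trans[OF weq_bl[OF \<gamma>s(1)] allw[OF \<gamma>(1)]] .
      then have "le (rs x (bl \<gamma>)) (u \<sigma>)" using weq_le wu by blast
      then have "lt (rs x (bl \<gamma> \<inter> S)) (u \<sigma>)" using lt_le_trans[OF wo_rsx wo_rsx wu lz] by blast
      then have "lt (rs x (bl \<gamma> \<inter> S)) p" using lt_le_trans[OF wo_rsx wu wop _ lesp] by blast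
      then show False using lt_not_le[OF wo_rsx wop] l1 SP by simp
    qed
  next
    case False
    have Dds: "Dd \<subseteq> Field s" using Dd_def J'_def by blast
    obtain \<delta> where \<delta>: "\<delta> \<in> Dd" "\<forall>\<gamma>\<in>Dd. (\<delta>,\<gamma>) \<in> s" using wo_min[OF wos Dds False] by blast
    have \<delta>s: "\<delta> \<in> Field s" "(\<sigma>,\<delta>) \<in> s" "\<delta> \<noteq> \<sigma>" "bl \<delta> \<inter> S \<noteq> {}" "\<not> weq (u \<delta>) (u \<sigma>)"
      using \<delta>(1) Dd_def J'_def by auto
    obtain d\<delta> where d\<delta>: "d\<delta> \<in> bl \<delta>" "d\<delta> \<in> S" using \<delta>s(4) by blast
    have preq: "\<And>\<beta>. \<beta> \<in> Field s \<Longrightarrow> (\<sigma>,\<beta>) \<in> s \<Longrightarrow> (\<beta>,\<delta>) \<in> s \<Longrightarrow> \<beta> \<noteq> \<delta> \<Longrightarrow> weq (u \<beta>) (u \<sigma>)"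
    proof -
      fix \<beta> assume \<beta>: "\<beta> \<in> Field s" "(\<sigma>,\<beta>) \<in> s" "(\<beta>,\<delta>) \<in> s" "\<beta> \<noteq> \<delta>"
      show "weq (u \<beta>) (u \<sigma>)"
      proof (cases "\<beta> = \<sigma>")
        case True then show ?thesis using weq_refl[of "u \<sigma>"] by simp
      next
        case False
        have "bl \<beta> \<subseteq> S" using H2[OF I _ \<beta>(2)] d\<delta> ix_bl[OF d\<delta>(1)] \<beta>(3,4) S_def by simp
        then have "bl \<beta> \<inter> S \<noteq> {}" using F5[OF \<beta>(1)] by blast
        then have bJ: "\<beta> \<in> J'" unfolding J'_def using \<beta> False by blast
        show ?thesis
        proof (rule ccontr)
          assume "\<not> weq (u \<beta>) (u \<sigma>)"
          then have "\<beta> \<in> Dd" using bJ Dd_def by blast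
          then have "(\<delta>,\<beta>) \<in> s" using \<delta>(2) by blast
          then show False using WO_antisym[OF wos \<beta>(3)] \<beta>(4) by blast
        qed
      qed
    qed
    have ltd: "lt (u \<delta>) (u \<sigma>)" using dense_first[OF sg \<delta>s(1) \<delta>s(2) \<delta>s(5) preq] by blast
    define P where "P = S \<inter> Lt \<delta>"
    have Pof: "ofilter (fst (rs x S)) P" using H4[OF Ss] P_def by simp
    have "bl \<sigma> \<subseteq> P" using H9[OF \<delta>s(2)] \<delta>s(3) sub S_def P_def by blast
    then have Pne: "P \<noteq> {}" using F5[OF sg] by blast
    have SPne: "S - P \<noteq> {}" using d\<delta> P_def Lt_def ix_bl[OF d\<delta>(1)] by auto
    have l1: "le p (rs x (S - P))" using suff[OF Pof Pne SPne] .
    have "S - P = S - Lt \<delta>" unfolding P_def by blast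
    then have SPseg: "S - P = seg \<delta> I" using H3[OF \<delta>s(1) \<delta>s(2)] S_def by simp
    show False
    proof (cases "bl \<delta> \<subseteq> S")
      case False
      have "S - P = S - Lt \<delta>" unfolding P_def by blast
      then have SP: "S - P = bl \<delta> \<inter> S" using H8[OF I \<delta>s(1) \<delta>s(2)] False S_def by simp
      have X: "bl \<delta> \<inter> S = bl \<delta> \<inter> I" using H7[OF \<delta>s(2)] S_def by simp
      have Xof: "ofilter (fst (rs x (bl \<delta>))) (bl \<delta> \<inter> S)" using H6[OF I] X by simp
      have "le (rs x (bl \<delta> \<inter> S)) (rs x (bl \<delta>))" using pre_le[OF pre_rs[OF wox bl_sub Xof]] .
      then have "le (rs x (bl \<delta> \<inter> S)) (u \<delta>)" using le_weq_right[OF wo_rsx wo_rsx wou[OF \<delta>s(1)] _ weq_bl[OF \<delta>s(1)]] by blast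
      then have "lt (rs x (bl \<delta> \<inter> S)) (u \<sigma>)" using le_lt_trans[OF wo_rsx wou[OF \<delta>s(1)] wu _ ltd] by blast
      then have "lt (rs x (bl \<delta> \<inter> S)) p" using lt_le_trans[OF wo_rsx wu wop _ lesp] by blast
      then show False using lt_not_le[OF wo_rsx wop] l1 SP by simp
    next
      case True
      have bsub: "bl \<delta> \<subseteq> S - P" using True P_def Lt_def ix_bl by auto
      have bof2: "ofilter (fst (rs x (S - P))) (bl \<delta>)"
      proof (rule ofilter_rsI[OF wox _ bsub])
        show "S - P \<subseteq> fld x" using Ss by blast
      next
        fix d d' assume d: "d \<in> bl \<delta>" and d': "d' \<in> S - P" and dd: "(d',d) \<in> fst x"
        have d'f: "d' \<in> fld x" using d' Ss by blast
        have "(ix d', \<delta>) \<in> s" using O2[OF d'f fld_bl[OF d] dd] ix_bl[OF d] by simp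
        moreover have "\<not> ((ix d', \<delta>) \<in> s \<and> ix d' \<noteq> \<delta>)" using d' d'f P_def Lt_def by blast
        ultimately have "ix d' = \<delta>" by blast
        then show "d' \<in> bl \<delta>" using in_bl[OF d'f] by simp
      qed
      have prez: "pre (rs x (bl \<delta>)) (rs x (S - P))" using pre_rs[OF wox _ bof2] Ss by blast
      show False
      proof (cases "strl (u \<delta>) (u \<sigma>)")
        case True
        have "strl (rs x (bl \<delta>)) (u \<sigma>)"
          using strl_weq_left[OF wou[OF \<delta>s(1)] wo_rsx wu True weq_sym[OF weq_bl[OF \<delta>s(1)]]] .
        then have "strl (rs x (S - P)) (u \<sigma>)" using strl_pre_left[OF wo_rsx wo_rsx wu _ prez] by blast
        then have sz: "strl (rs x (S - P)) p" using strl_pre_right[OF wo_rsx wu wop _ pre1] by blast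
        have "\<not> weq (rs x (S - P)) p"
        proof
          assume "weq (rs x (S - P)) p"
          then have "pre p (rs x (S - P))" using weq_pre[OF weq_sym wo_rsx] by blast
          then show False using strl_pre_contra[OF wo_rsx wop sz] by blast
        qed
        then have "lt (rs x (S - P)) p" using strl_le[OF sz] unfolding lt_def by blast
        then show False using lt_not_le[OF wo_rsx wop] l1 by blast
      next
        case False
        have "pre (u \<delta>) (u \<sigma>)" using ltd False unfolding lt_def le_def by blast
        then have "le (rs x (seg \<delta> I)) (u \<sigma>)" using IHs[OF \<delta>s(1) _ \<delta>s(5) I] by blast
        then have "lt (rs x (S - P)) p" using SPseg le_lt_trans[OF wo_rsx wu wop _ ltsp] by simp
        then show False using lt_not_le[OF wo_rsx wop] l1 by blast
      qed
    qed
  qed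
qed

end


context fact
begin

lemma V_step:
  assumes IH: "\<And>(p' :: (nat,'a) wd) \<sigma>' I'. wf_word p' \<Longrightarrow> prime_word p' \<Longrightarrow> (fst p', fst p) \<in> ordLess \<Longrightarrow> \<sigma>' \<in> Field s
      \<Longrightarrow> pre (u \<sigma>') p' \<Longrightarrow> \<not> weq (u \<sigma>') p' \<Longrightarrow> ofilter (fst x) I' \<Longrightarrow> le (rs x (seg \<sigma>' I')) p'"
    and wfp: "wf_word (p :: (nat,'a) wd)" and pp: "prime_word p" and sg: "\<sigma> \<in> Field s"
    and pre1: "pre (u \<sigma>) p" and nw1: "\<not> weq (u \<sigma>) p" and I: "ofilter (fst x) I"
  shows "le (rs x (seg \<sigma> I)) p"
proof (rule ccontr)
  assume nle: "\<not> le (rs x (seg \<sigma> I)) p"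
  define S where "S = seg \<sigma> I"
  have Ss: "S \<subseteq> fld x" using sseg S_def by simp
  have wop: "WO p" using wfp unfolding wf_word_def by blast
  have fS: "fld (rs x S) = S" using fld_rs[OF wox Ss] .
  have wu: "WO (u \<sigma>)" using wou[OF sg] .
  have ordl: "(fst (u \<sigma>), fst p) \<in> ordLess" using proper_ordLess[OF wu wop pre1 nw1] .
  have lesp: "le (u \<sigma>) p" using pre_le[OF pre1] .
  have ltsp: "lt (u \<sigma>) p" using lesp nw1 unfolding lt_def by blast
  have IHs: "\<And>\<sigma>' I'. \<sigma>' \<in> Field s \<Longrightarrow> pre (u \<sigma>') (u \<sigma>) \<Longrightarrow> \<not> weq (u \<sigma>') (u \<sigma>) \<Longrightarrow> ofilter (fst x) I'
      \<Longrightarrow> le (rs x (seg \<sigma>' I')) (u \<sigma>)"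
    using IH[OF wfu[OF sg] pr[OF sg] ordl] by blast
  have K: "\<And>I'. ofilter (fst x) I' \<Longrightarrow> bl \<sigma> \<subseteq> seg \<sigma> I' \<Longrightarrow> bl \<sigma> \<noteq> seg \<sigma> I' \<Longrightarrow> weq p (rs x (seg \<sigma> I')) \<Longrightarrow> False"
    using K_step[OF IH wfp pp sg] by blast
  have ltp: "lt p (rs x S)" using not_le_lt[OF wo_rsx wop] nle S_def by simp
  obtain B A g k where v: "VIOL p (rs x S) B A g k" using lt_VIOL[OF wop wo_rsx ltp] by blast
  have vB: "ofilter (fst (rs x S)) B" "minc (fst (rs x S)) B k" using v unfolding VIOL_def by auto
  have kS: "k \<in> S" "k \<notin> B" using minc_in[OF vB(2)] fS by auto
  have kf: "k \<in> fld x" using kS Ss by blast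
  have Bc: "B = {d \<in> S. (d,k) \<in> fst x \<and> d \<noteq> k}" using Bchar[OF wox Ss vB(1) vB(2)] .
  define \<eta> where "\<eta> = ix k"
  have \<eta>s: "\<eta> \<in> Field s" "(\<sigma>,\<eta>) \<in> s" using F1(1)[OF kf] kS S_def \<eta>_def unfolding seg_def T_def by auto
  have kI: "k \<in> I" using kS S_def seg_def by blast
  have BkS: "B \<union> {k} \<subseteq> S" using Bc kS by blast
  have ltk: "lt p (rs x (B \<union> {k}))" using VIOL_lt[OF wop wo_rsx v] rs_sub[OF BkS] by simp
  show False
  proof (cases "\<eta> = \<sigma>")
    case True
    have sub1: "B \<union> {k} \<subseteq> bl \<sigma>"
    proof
      fix d assume d: "d \<in> B \<union> {k}"
      show "d \<in> bl \<sigma>"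
      proof (cases "d = k")
        case True then show ?thesis using in_bl[OF kf] \<eta>_def \<open>\<eta> = \<sigma>\<close> by simp
      next
        case False
        then have dd: "d \<in> S" "(d,k) \<in> fst x" using d Bc by auto
        have df: "d \<in> fld x" using dd Ss by blast
        have "(ix d, \<sigma>) \<in> s" using O2[OF df kf dd(2)] \<eta>_def \<open>\<eta> = \<sigma>\<close> by simp
        moreover have "(\<sigma>, ix d) \<in> s" using dd(1) S_def unfolding seg_def T_def by blast
        ultimately have "ix d = \<sigma>" using WO_antisym[OF wos] by blast
        then show ?thesis using in_bl[OF df] by simp
      qed
    qed
    have of1: "ofilter (fst (rs x (bl \<sigma>))) (B \<union> {k})"
    proof (rule ofilter_rsI[OF wox bl_sub sub1])
      fix d d' assume d: "d \<in> B \<union> {k}" and d': "d' \<in> bl \<sigma>" and dd: "(d',d) \<in> fst x"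
      have dk: "(d,k) \<in> fst x" using d Bc WO_refl_pt[OF wox kf] by auto
      have d'k: "(d',k) \<in> fst x" using WO_trans[OF wox dd dk] .
      have d'f: "d' \<in> fld x" using fld_bl[OF d'] .
      have "d' \<in> I" using ofilter_down[OF I kI d'k] .
      moreover have "d' \<in> T \<sigma>" using bl_T[OF sg] d' by blast
      ultimately have "d' \<in> S" using S_def seg_def by blast
      then show "d' \<in> B \<union> {k}" using Bc d'k by blast
    qed
    have "le (rs x (B \<union> {k})) (rs x (bl \<sigma>))" using pre_le[OF pre_rs[OF wox bl_sub of1]] .
    then have "le (rs x (B \<union> {k})) (u \<sigma>)" using le_weq_right[OF wo_rsx wo_rsx wu _ weq_bl[OF sg]] by blast
    then have "le (rs x (B \<union> {k})) p" using le_trans[OF wo_rsx wu wop _ lesp] by blast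
    then have "lt p p" using lt_le_trans[OF wop wo_rsx wop ltk] by blast
    then show False unfolding lt_def using weq_refl by blast
  next
    case False
    then have \<eta>ne: "\<eta> \<noteq> \<sigma>" .
    have gen: "\<And>\<gamma>. \<gamma> \<in> Field s \<Longrightarrow> (\<sigma>,\<gamma>) \<in> s \<Longrightarrow> \<gamma> \<noteq> \<sigma> \<Longrightarrow> (\<gamma>,\<eta>) \<in> s \<Longrightarrow>
         le p (rs p (fld p - g ` (S \<inter> Lt \<gamma>))) \<and>
         lt (rs p (fld p - g ` (S \<inter> Lt \<gamma>))) (rs x (seg \<gamma> (I \<inter> und k))) \<and>
         (\<gamma> \<noteq> \<eta> \<longrightarrow> pre (rs x (bl \<gamma>)) (rs p (fld p - g ` (S \<inter> Lt \<gamma>))))"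
    proof -
      fix \<gamma> assume \<gamma>: "\<gamma> \<in> Field s" "(\<sigma>,\<gamma>) \<in> s" "\<gamma> \<noteq> \<sigma>" "(\<gamma>,\<eta>) \<in> s"
      define P where "P = S \<inter> Lt \<gamma>"
      have Pof: "ofilter (fst (rs x S)) P" using H4[OF Ss] P_def by simp
      have PS: "P \<subseteq> S" using P_def by blast
      have PB: "P \<subseteq> B"
      proof
        fix d assume d: "d \<in> P"
        have dS: "d \<in> S" and df: "d \<in> fld x" and dl: "(ix d, \<gamma>) \<in> s" "ix d \<noteq> \<gamma>"
          using d P_def Lt_def Ss by auto
        have die: "(ix d, \<eta>) \<in> s" using WO_trans[OF wos dl(1) \<gamma>(4)] .
        have "ix d \<noteq> \<eta>"
        proof
          assume "ix d = \<eta>"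
          then have "\<gamma> = \<eta>" using WO_antisym[OF wos \<gamma>(4)] dl(1) by simp
          then show False using dl(2) \<open>ix d = \<eta>\<close> by simp
        qed
        then have "(d,k) \<in> fst x" "d \<noteq> k" using O3[OF df kf] die \<eta>_def by auto
        then show "d \<in> B" using Bc dS by blast
      qed
      have blP: "bl \<sigma> \<subseteq> P"
      proof
        fix d assume d: "d \<in> bl \<sigma>"
        have df: "d \<in> fld x" using fld_bl[OF d] .
        have "(d,k) \<in> fst x" using O3(1)[OF df kf] ix_bl[OF d] \<eta>s(2) \<eta>ne \<eta>_def by auto
        then have "d \<in> I" using ofilter_down[OF I kI] by blast
        moreover have "d \<in> T \<sigma>" using bl_T[OF sg] d by blast
        moreover have "d \<in> Lt \<gamma>" using d \<gamma>(2,3) unfolding Lt_def bl_def by auto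
        ultimately show "d \<in> P" using P_def S_def seg_def by blast
      qed
      have Pne: "P \<noteq> {}" using blP F5[OF sg] by blast
      have sh1: "ofilter (fst p) (g ` P)" using VIOL_shift(1)[OF wop wo_rsx v Pof PB] .
      have sh2: "isom (rs x P) (rs p (g ` P)) g" using VIOL_shift(2)[OF wop wo_rsx v Pof PB] rs_sub[OF PS] by simp
      have sh3: "VIOL (rs p (fld p - g ` P)) (rs x (S - P)) (B - P) (A - g ` P) g k"
        using VIOL_shift(3)[OF wop wo_rsx v Pof PB] rs_diff[OF Ss] by simp
      define q where "q = rs p (fld p - g ` P)"
      have qne: "fld p - g ` P \<noteq> {}"
      proof
        assume emp: "fld p - g ` P = {}"
        have "g ` P \<subseteq> fld p" using ofilter_sub[OF sh1] .
        then have gP: "g ` P = fld p" using emp by blast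
        then have "isom (rs x P) p g" using sh2 by simp
        then have wpP: "weq p (rs x P)" using weq_isom weq_sym by blast
        have Pseg: "P = seg \<sigma> (I \<inter> Lt \<gamma>)" using P_def S_def seg_def by auto
        have I2: "ofilter (fst x) (I \<inter> Lt \<gamma>)" using ofilter_Int[OF I of_Lt] .
        show False
        proof (cases "bl \<sigma> = P")
          case True
          then have "weq p (rs x (bl \<sigma>))" using wpP by simp
          then have "weq (u \<sigma>) p" using weq_trans[OF weq_sym[OF weq_bl[OF sg]] weq_sym] by blast
          then show False using nw1 by blast
        next
          case False
          show False using K[OF I2] blP False wpP Pseg by simp
        qed
      qed
      have gPne: "g ` P \<noteq> {}" using Pne by blast
      have lpq: "le p q" using prime_suffix[OF pp wfp weq_refl sh1 gPne qne] q_def by simp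
      have wq: "WO q" using WO_rs[OF wop] q_def by simp
      have wr2: "WO (rs x (S - P))" by (rule wo_rsx)
      have sh3': "VIOL q (rs x (S - P)) (B - P) (A - g ` P) g k" using sh3 q_def by simp
      have kSP: "(B - P) \<union> {k} \<subseteq> S - P" using Bc kS PB by blast
      have ltq: "lt q (rs x ((B - P) \<union> {k}))" using VIOL_lt[OF wq wr2 sh3'] rs_sub[OF kSP] by simp
      have eqseg: "(B - P) \<union> {k} = seg \<gamma> (I \<inter> und k)"
      proof
        show "(B - P) \<union> {k} \<subseteq> seg \<gamma> (I \<inter> und k)"
        proof
          fix d assume d: "d \<in> (B - P) \<union> {k}"
          show "d \<in> seg \<gamma> (I \<inter> und k)"
          proof (cases "d = k")
            case True
            have "k \<in> T \<gamma>" using in_T[OF kf] \<gamma>(4) \<eta>_def by simp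
            moreover have "k \<in> und k" using und_def kf WO_refl_pt[OF wox kf] by blast
            ultimately show ?thesis using True kI seg_def by blast
          next
            case False
            then have dd: "d \<in> S" "(d,k) \<in> fst x" "d \<notin> P" using d Bc by auto
            have df: "d \<in> fld x" using dd Ss by blast
            have "d \<notin> Lt \<gamma>" using dd P_def by blast
            then have nl: "\<not> ((ix d, \<gamma>) \<in> s \<and> ix d \<noteq> \<gamma>)" using df Lt_def by blast
            have "(\<gamma>, ix d) \<in> s"
            proof (cases "ix d = \<gamma>")
              case True then show ?thesis using WO_refl_pt[OF wos \<gamma>(1)] by simp
            next
              case False then show ?thesis using nl WO_total[OF wos \<gamma>(1) F1(1)[OF df]] by blast
            qed
            then have "d \<in> T \<gamma>" using in_T[OF df] by blast
            moreover have "d \<in> I" using dd S_def seg_def by blast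
            moreover have "d \<in> und k" using dd df und_def by blast
            ultimately show ?thesis using seg_def by blast
          qed
        qed
      next
        show "seg \<gamma> (I \<inter> und k) \<subseteq> (B - P) \<union> {k}"
        proof
          fix d assume d: "d \<in> seg \<gamma> (I \<inter> und k)"
          have df: "d \<in> fld x" and dT: "(\<gamma>, ix d) \<in> s" and dI: "d \<in> I" and dk: "(d,k) \<in> fst x"
            using d unfolding seg_def T_def und_def by auto
          have "(\<sigma>, ix d) \<in> s" using WO_trans[OF wos \<gamma>(2) dT] .
          then have dS: "d \<in> S" using df dI S_def seg_def T_def by blast
          have "d \<notin> Lt \<gamma>" using dT WO_antisym[OF wos] Lt_def by blast
          then have "d \<notin> P" using P_def by blast
          then show "d \<in> (B - P) \<union> {k}" using dS dk Bc by blast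
        qed
      qed
      have third: "\<gamma> \<noteq> \<eta> \<longrightarrow> pre (rs x (bl \<gamma>)) q"
      proof
        assume gne: "\<gamma> \<noteq> \<eta>"
        have bgsub: "bl \<gamma> \<subseteq> B - P"
        proof
          fix d assume d: "d \<in> bl \<gamma>"
          have df: "d \<in> fld x" using fld_bl[OF d] .
          have dk: "(d,k) \<in> fst x" "d \<noteq> k" using O3[OF df kf] ix_bl[OF d] \<gamma>(4) gne \<eta>_def by auto
          have "d \<in> I" using ofilter_down[OF I kI dk(1)] .
          moreover have "d \<in> T \<sigma>" using in_T[OF df] ix_bl[OF d] \<gamma>(2) by simp
          ultimately have "d \<in> S" using S_def seg_def by blast
          then have "d \<in> B" using Bc dk by blast
          moreover have "d \<notin> P" using ix_bl[OF d] P_def Lt_def by auto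
          ultimately show "d \<in> B - P" by blast
        qed
        have bgof: "ofilter (fst (rs x (S - P))) (bl \<gamma>)"
        proof (rule ofilter_rsI[OF wox])
          show "S - P \<subseteq> fld x" using Ss by blast
          show "bl \<gamma> \<subseteq> S - P" using bgsub Bc by blast
        next
          fix d d' assume d: "d \<in> bl \<gamma>" and d': "d' \<in> S - P" and dd: "(d',d) \<in> fst x"
          have d'f: "d' \<in> fld x" using d' Ss by blast
          have "(ix d', \<gamma>) \<in> s" using O2[OF d'f fld_bl[OF d] dd] ix_bl[OF d] by simp
          moreover have "d' \<notin> Lt \<gamma>" using d' P_def by blast
          ultimately have "ix d' = \<gamma>" using d'f Lt_def by blast
          then show "d' \<in> bl \<gamma>" using in_bl[OF d'f] by simp
        qed
        have bgB: "bl \<gamma> \<subseteq> B - P" by (rule bgsub)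
        have s1: "ofilter (fst q) (g ` bl \<gamma>)" using VIOL_shift(1)[OF wq wr2 sh3' bgof bgB] .
        have SPs: "bl \<gamma> \<subseteq> S - P" using bgsub Bc by blast
        have s2: "isom (rs x (bl \<gamma>)) (rs q (g ` bl \<gamma>)) g"
          using VIOL_shift(2)[OF wq wr2 sh3' bgof bgB] rs_sub[OF SPs] by simp
        show "pre (rs x (bl \<gamma>)) q" unfolding pre_def using s1 s2 weq_isom by blast
      qed
      show "le p (rs p (fld p - g ` (S \<inter> Lt \<gamma>))) \<and>
         lt (rs p (fld p - g ` (S \<inter> Lt \<gamma>))) (rs x (seg \<gamma> (I \<inter> und k))) \<and>
         (\<gamma> \<noteq> \<eta> \<longrightarrow> pre (rs x (bl \<gamma>)) (rs p (fld p - g ` (S \<inter> Lt \<gamma>))))"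
        using lpq ltq eqseg third q_def P_def by simp
    qed
    have wq: "\<And>\<gamma>. WO (rs p (fld p - g ` (S \<inter> Lt \<gamma>)))" using WO_rs[OF wop] by blast
    have I2: "ofilter (fst x) (I \<inter> und k)" using ofilter_Int[OF I of_und] .
    have segsub: "seg \<eta> (I \<inter> und k) \<subseteq> bl \<eta>"
    proof
      fix d assume d: "d \<in> seg \<eta> (I \<inter> und k)"
      have df: "d \<in> fld x" and dT: "(\<eta>, ix d) \<in> s" and dk: "(d,k) \<in> fst x"
        using d unfolding seg_def T_def und_def by auto
      have "(ix d, \<eta>) \<in> s" using O2[OF df kf dk] \<eta>_def by simp
      then have "ix d = \<eta>" using WO_antisym[OF wos] dT by blast
      then show "d \<in> bl \<eta>" using in_bl[OF df] by simp
    qed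
    have segof: "ofilter (fst (rs x (bl \<eta>))) (seg \<eta> (I \<inter> und k))"
    proof (rule ofilter_rsI[OF wox bl_sub segsub])
      fix d d' assume d: "d \<in> seg \<eta> (I \<inter> und k)" and d': "d' \<in> bl \<eta>" and dd: "(d',d) \<in> fst x"
      have "d' \<in> I \<inter> und k" using ofilter_down[OF I2] d dd unfolding seg_def by blast
      moreover have "d' \<in> T \<eta>" using bl_T[OF \<eta>s(1)] d' by blast
      ultimately show "d' \<in> seg \<eta> (I \<inter> und k)" using seg_def by blast
    qed
    have le\<eta>: "le (rs x (seg \<eta> (I \<inter> und k))) (u \<eta>)"
      using le_weq_right[OF wo_rsx wo_rsx wou[OF \<eta>s(1)] pre_le[OF pre_rs[OF wox bl_sub segof]] weq_bl[OF \<eta>s(1)]] .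
    have g\<eta>: "le p (rs p (fld p - g ` (S \<inter> Lt \<eta>))) \<and> lt (rs p (fld p - g ` (S \<inter> Lt \<eta>))) (rs x (seg \<eta> (I \<inter> und k)))"
      using gen[OF \<eta>s(1) \<eta>s(2) \<eta>ne WO_refl_pt[OF wos \<eta>s(1)]] by blast
    define q\<eta> where "q\<eta> = rs p (fld p - g ` (S \<inter> Lt \<eta>))"
    have wq\<eta>: "WO q\<eta>" using WO_rs[OF wop] q\<eta>_def by simp
    have lq\<eta>: "lt q\<eta> (u \<eta>)" using lt_le_trans[OF wq\<eta> wo_rsx wou[OF \<eta>s(1)] _ le\<eta>] g\<eta> q\<eta>_def by blast
    have lpq\<eta>: "le p q\<eta>" using g\<eta> q\<eta>_def by blast
    define Dd where "Dd = {\<gamma> \<in> Field s. (\<sigma>,\<gamma>) \<in> s \<and> \<gamma> \<noteq> \<sigma> \<and> (\<gamma>,\<eta>) \<in> s \<and> \<not> weq (u \<gamma>) (u \<sigma>)}"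
    show False
    proof (cases "Dd = {}")
      case True
      then have we: "weq (u \<eta>) (u \<sigma>)" using Dd_def \<eta>s \<eta>ne WO_refl_pt[OF wos \<eta>s(1)] by blast
      have "lt q\<eta> (u \<sigma>)" using lt_le_trans[OF wq\<eta> wou[OF \<eta>s(1)] wu lq\<eta> weq_le[OF we wu]] .
      then have "lt q\<eta> p" using lt_le_trans[OF wq\<eta> wu wop _ lesp] by blast
      then show False using lt_not_le[OF wq\<eta> wop] lpq\<eta> by blast
    next
      case False
      have Dds: "Dd \<subseteq> Field s" using Dd_def by blast
      obtain \<delta> where \<delta>: "\<delta> \<in> Dd" "\<forall>\<gamma>\<in>Dd. (\<delta>,\<gamma>) \<in> s" using wo_min[OF wos Dds False] by blast
      have \<delta>s: "\<delta> \<in> Field s" "(\<sigma>,\<delta>) \<in> s" "\<delta> \<noteq> \<sigma>" "(\<delta>,\<eta>) \<in> s" "\<not> weq (u \<delta>) (u \<sigma>)"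
        using \<delta>(1) Dd_def by auto
      have preq: "\<And>\<beta>. \<beta> \<in> Field s \<Longrightarrow> (\<sigma>,\<beta>) \<in> s \<Longrightarrow> (\<beta>,\<delta>) \<in> s \<Longrightarrow> \<beta> \<noteq> \<delta> \<Longrightarrow> weq (u \<beta>) (u \<sigma>)"
      proof -
        fix \<beta> assume \<beta>: "\<beta> \<in> Field s" "(\<sigma>,\<beta>) \<in> s" "(\<beta>,\<delta>) \<in> s" "\<beta> \<noteq> \<delta>"
        show "weq (u \<beta>) (u \<sigma>)"
        proof (cases "\<beta> = \<sigma>")
          case True then show ?thesis using weq_refl[of "u \<sigma>"] by simp
        next
          case False
          show ?thesis
          proof (rule ccontr)
            assume "\<not> weq (u \<beta>) (u \<sigma>)"
            moreover have "(\<beta>,\<eta>) \<in> s" using WO_trans[OF wos \<beta>(3) \<delta>s(4)] .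
            ultimately have "\<beta> \<in> Dd" using Dd_def \<beta> False by blast
            then have "(\<delta>,\<beta>) \<in> s" using \<delta>(2) by blast
            then show False using WO_antisym[OF wos \<beta>(3)] \<beta>(4) by blast
          qed
        qed
      qed
      have ltd: "lt (u \<delta>) (u \<sigma>)" using dense_first[OF sg \<delta>s(1) \<delta>s(2) \<delta>s(5) preq] by blast
      show False
      proof (cases "\<delta> = \<eta>")
        case True
        have "le (u \<eta>) (u \<sigma>)" using ltd True unfolding lt_def by blast
        then have "lt q\<eta> (u \<sigma>)" using lt_le_trans[OF wq\<eta> wou[OF \<eta>s(1)] wu lq\<eta>] by blast
        then have "lt q\<eta> p" using lt_le_trans[OF wq\<eta> wu wop _ lesp] by blast
        then show False using lt_not_le[OF wq\<eta> wop] lpq\<eta> by blast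
      next
        case False
        define q where "q = rs p (fld p - g ` (S \<inter> Lt \<delta>))"
        have gd: "le p q" "lt q (rs x (seg \<delta> (I \<inter> und k)))" "pre (rs x (bl \<delta>)) q"
          using gen[OF \<delta>s(1) \<delta>s(2) \<delta>s(3) \<delta>s(4)] False q_def by auto
        have wq': "WO q" using wq q_def by simp
        show False
        proof (cases "strl (u \<delta>) (u \<sigma>)")
          case True
          have "strl (rs x (bl \<delta>)) (u \<sigma>)"
            using strl_weq_left[OF wou[OF \<delta>s(1)] wo_rsx wu True weq_sym[OF weq_bl[OF \<delta>s(1)]]] .
          then have "strl q (u \<sigma>)" using strl_pre_left[OF wo_rsx wq' wu _ gd(3)] by blast
          then have sz: "strl q p" using strl_pre_right[OF wq' wu wop _ pre1] by blast
          have "\<not> weq q p"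
          proof
            assume "weq q p"
            then have "pre p q" using weq_pre[OF weq_sym wq'] by blast
            then show False using strl_pre_contra[OF wq' wop sz] by blast
          qed
          then have "lt q p" using strl_le[OF sz] unfolding lt_def by blast
          then show False using lt_not_le[OF wq' wop] gd(1) by blast
        next
          case False
          have "pre (u \<delta>) (u \<sigma>)" using ltd False unfolding lt_def le_def by blast
          then have "le (rs x (seg \<delta> (I \<inter> und k))) (u \<sigma>)" using IHs[OF \<delta>s(1) _ \<delta>s(5) I2] by blast
          then have "lt q (u \<sigma>)" using lt_le_trans[OF wq' wo_rsx wu gd(2)] by blast
          then have "lt q p" using lt_le_trans[OF wq' wu wop _ lesp] by blast
          then show False using lt_not_le[OF wq' wop] gd(1) by blast
        qed
      qed
    qed
  qed
qed

end


context fact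
begin

lemma V_all_aux:
  fixes p :: "(nat,'a) wd"
  shows "\<forall>\<sigma> I. wf_word p \<longrightarrow> prime_word p \<longrightarrow> \<sigma> \<in> Field s \<longrightarrow> pre (u \<sigma>) p \<longrightarrow> \<not> weq (u \<sigma>) p
     \<longrightarrow> ofilter (fst x) I \<longrightarrow> le (rs x (seg \<sigma> I)) p"
proof (rule wf_induct[OF wf_inv_image[OF wf_ordLess, of fst], of _ p])
  fix p :: "(nat,'a) wd"
  assume IH: "\<forall>y. (y, p) \<in> inv_image ordLess fst \<longrightarrow> (\<forall>\<sigma> I. wf_word y \<longrightarrow> prime_word y \<longrightarrow> \<sigma> \<in> Field s
     \<longrightarrow> pre (u \<sigma>) y \<longrightarrow> \<not> weq (u \<sigma>) y \<longrightarrow> ofilter (fst x) I \<longrightarrow> le (rs x (seg \<sigma> I)) y)"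
  show "\<forall>\<sigma> I. wf_word p \<longrightarrow> prime_word p \<longrightarrow> \<sigma> \<in> Field s \<longrightarrow> pre (u \<sigma>) p \<longrightarrow> \<not> weq (u \<sigma>) p
     \<longrightarrow> ofilter (fst x) I \<longrightarrow> le (rs x (seg \<sigma> I)) p"
  proof (intro allI impI)
    fix \<sigma> I assume a: "wf_word p" "prime_word p" "\<sigma> \<in> Field s" "pre (u \<sigma>) p" "\<not> weq (u \<sigma>) p"
      "ofilter (fst x) I"
    show "le (rs x (seg \<sigma> I)) p"
    proof (rule V_step[OF _ a])
      fix p' :: "(nat,'a) wd" and \<sigma>' I'
      assume b: "wf_word p'" "prime_word p'" "(fst p', fst p) \<in> ordLess" "\<sigma>' \<in> Field s"
        "pre (u \<sigma>') p'" "\<not> weq (u \<sigma>') p'" "ofilter (fst x) I'"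
      have "(p', p) \<in> inv_image ordLess fst" using b(3) by simp
      then show "le (rs x (seg \<sigma>' I')) p'" using IH b by blast
    qed
  qed
qed

lemma K_all:
  fixes p :: "(nat,'a) wd"
  assumes "wf_word p" "prime_word p" "\<sigma> \<in> Field s" "ofilter (fst x) I"
    "bl \<sigma> \<subseteq> seg \<sigma> I" "bl \<sigma> \<noteq> seg \<sigma> I" "weq p (rs x (seg \<sigma> I))"
  shows False
proof (rule K_step[OF _ assms])
  fix p' :: "(nat,'a) wd" and \<sigma>' I'
  assume "wf_word p'" "prime_word p'" "(fst p', fst p) \<in> ordLess" "\<sigma>' \<in> Field s"
    "pre (u \<sigma>') p'" "\<not> weq (u \<sigma>') p'" "ofilter (fst x) I'"
  then show "le (rs x (seg \<sigma>' I')) p'" using V_all_aux by blast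
qed

definition Le where "Le g = {d \<in> fld x. (ix d, g) \<in> s}"
definition Up where "Up c = {d \<in> fld x. (c,d) \<in> fst x}"

lemma of_Le: "ofilter (fst x) (Le g)"
proof (rule ofilterI)
  show "Le g \<subseteq> fld x" unfolding Le_def by blast
next
  fix a b assume a: "a \<in> Le g" and ba: "(b,a) \<in> fst x"
  have af: "a \<in> fld x" and ag: "(ix a, g) \<in> s" using a Le_def by auto
  have bf: "b \<in> fld x" using ba by (simp add: FieldI1)
  have "(ix b, ix a) \<in> s" using O2[OF bf af ba] .
  then have "(ix b, g) \<in> s" using WO_trans[OF wos _ ag] by blast
  then show "b \<in> Le g" using bf Le_def by blast
qed

lemma T_Up: assumes c: "c \<in> bl b" and m: "\<forall>d\<in>bl b. (c,d) \<in> fst x" shows "T b = Up c"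
proof
  have cf: "c \<in> fld x" using fld_bl[OF c] .
  show "T b \<subseteq> Up c"
  proof
    fix d assume d: "d \<in> T b"
    have df: "d \<in> fld x" and bd: "(b, ix d) \<in> s" using d T_def by auto
    show "d \<in> Up c"
    proof (cases "ix d = b")
      case True
      then have "d \<in> bl b" using in_bl[OF df] by simp
      then show ?thesis using m df Up_def by blast
    next
      case False
      then have "(c,d) \<in> fst x" using O3(1)[OF fld_bl[OF c] df] ix_bl[OF c] bd by simp
      then show ?thesis using df Up_def by blast
    qed
  qed
next
  show "Up c \<subseteq> T b"
  proof
    fix d assume d: "d \<in> Up c"
    have df: "d \<in> fld x" and cd: "(c,d) \<in> fst x" using d Up_def by auto
    have "(ix c, ix d) \<in> s" using O2[OF fld_bl[OF c] df cd] .
    then show "d \<in> T b" using ix_bl[OF c] df T_def by auto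
  qed
qed

lemma bl_Up_Le: assumes c: "c \<in> bl b" and m: "\<forall>d\<in>bl b. (c,d) \<in> fst x" shows "bl b = Up c \<inter> Le b"
proof
  have cf: "c \<in> fld x" using fld_bl[OF c] .
  have bs: "b \<in> Field s" using F1(1)[OF cf] ix_bl[OF c] by simp
  show "bl b \<subseteq> Up c \<inter> Le b"
  proof
    fix d assume d: "d \<in> bl b"
    have "d \<in> Up c" using m d fld_bl[OF d] Up_def by blast
    moreover have "d \<in> Le b" using d ix_bl[OF d] fld_bl[OF d] WO_refl_pt[OF wos bs] Le_def by simp
    ultimately show "d \<in> Up c \<inter> Le b" by blast
  qed
next
  show "Up c \<inter> Le b \<subseteq> bl b"
  proof
    fix d assume d: "d \<in> Up c \<inter> Le b"
    have df: "d \<in> fld x" and cd: "(c,d) \<in> fst x" and db: "(ix d, b) \<in> s" using d Up_def Le_def by auto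
    have "(b, ix d) \<in> s" using O2[OF fld_bl[OF c] df cd] ix_bl[OF c] by simp
    then have "ix d = b" using WO_antisym[OF wos db] by blast
    then show "d \<in> bl b" using in_bl[OF df] by simp
  qed
qed

lemma bl_disj: "d \<in> bl b1 \<Longrightarrow> d \<in> bl b2 \<Longrightarrow> b1 = b2" unfolding bl_def by auto

lemma bl_min_ex: assumes "b \<in> Field s" shows "\<exists>c\<in>bl b. \<forall>d\<in>bl b. (c,d) \<in> fst x"
  using wo_min[OF wox bl_sub F5[OF assms]] .

end


locale two = A: fact x s u phi + B: fact x s' u' phi'
  for x :: "(nat,'a::linorder) wd" and s :: "nat rel" and u and phi and s' :: "nat rel" and u' and phi'
begin

lemma Up_eq: "A.Up c = B.Up c" unfolding A.Up_def B.Up_def by simp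

lemma block_eq:
  assumes b: "b \<in> Field s" "b' \<in> Field s'" and c: "c \<in> A.bl b" "c \<in> B.bl b'"
    and m1: "\<forall>d\<in>A.bl b. (c,d) \<in> fst x" and m2: "\<forall>d\<in>B.bl b'. (c,d) \<in> fst x"
  shows "A.bl b = B.bl b'"
proof -
  have e1: "A.bl b = A.Up c \<inter> A.Le b" using A.bl_Up_Le[OF c(1) m1] .
  have e2: "B.bl b' = A.Up c \<inter> B.Le b'" using B.bl_Up_Le[OF c(2) m2] Up_eq by simp
  have TA: "A.T b = A.Up c" using A.T_Up[OF c(1) m1] .
  have TB: "B.T b' = A.Up c" using B.T_Up[OF c(2) m2] Up_eq by simp
  have "A.Le b \<subseteq> B.Le b' \<or> B.Le b' \<subseteq> A.Le b" using ofilter_linear[OF A.wox A.of_Le B.of_Le] .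
  then show ?thesis
  proof
    assume sub: "A.Le b \<subseteq> B.Le b'"
    have s1: "A.bl b \<subseteq> A.seg b (B.Le b')" using e1 e2 TA sub A.seg_def by auto
    have s2: "A.seg b (B.Le b') = B.bl b'" using e2 TA A.seg_def by simp
    show ?thesis
    proof (rule ccontr)
      assume ne: "A.bl b \<noteq> B.bl b'"
      have "weq (u' b') (rs x (A.seg b (B.Le b')))" using weq_sym[OF B.weq_bl[OF b(2)]] s2 by simp
      then show False using A.K_all[OF B.wfu[OF b(2)] B.pr[OF b(2)] b(1) B.of_Le s1] ne s2 by simp
    qed
  next
    assume sub: "B.Le b' \<subseteq> A.Le b"
    have s1: "B.bl b' \<subseteq> B.seg b' (A.Le b)" using e1 e2 TB sub B.seg_def by auto
    have s2: "B.seg b' (A.Le b) = A.bl b" using e1 TB B.seg_def by simp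
    show ?thesis
    proof (rule ccontr)
      assume ne: "A.bl b \<noteq> B.bl b'"
      have "weq (u b) (rs x (B.seg b' (A.Le b)))" using weq_sym[OF A.weq_bl[OF b(1)]] s2 by simp
      then show False using B.K_all[OF A.wfu[OF b(1)] A.pr[OF b(1)] b(2) A.of_Le s1] ne s2 by auto
    qed
  qed
qed

lemma cut_sub:
  assumes cf: "c \<in> fld x" and c1: "\<forall>d\<in>A.bl (A.ix c). (c,d) \<in> fst x"
    and hyp: "\<forall>c'\<in>fld x. (c',c) \<in> fst x \<and> c' \<noteq> c \<longrightarrow>
        ((\<forall>d\<in>A.bl (A.ix c'). (c',d) \<in> fst x) \<longleftrightarrow> (\<forall>d\<in>B.bl (B.ix c'). (c',d) \<in> fst x))"
  shows "\<forall>d\<in>B.bl (B.ix c). (c,d) \<in> fst x"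
proof (rule ccontr)
  assume n: "\<not> (\<forall>d\<in>B.bl (B.ix c). (c,d) \<in> fst x)"
  define b' where "b' = B.ix c"
  have b's: "b' \<in> Field s'" using B.F1(1)[OF cf] b'_def by simp
  obtain c' where c': "c' \<in> B.bl b'" "\<forall>d\<in>B.bl b'. (c',d) \<in> fst x" using B.bl_min_ex[OF b's] by blast
  have cB: "c \<in> B.bl b'" using B.in_bl[OF cf] b'_def by simp
  have c'f: "c' \<in> fld x" using B.fld_bl[OF c'(1)] .
  have c'c: "(c',c) \<in> fst x" using c'(2) cB by blast
  have c'ne: "c' \<noteq> c" using n c'(2) b'_def by blast
  have ix'c': "B.ix c' = b'" using B.ix_bl[OF c'(1)] .
  have "\<forall>d\<in>A.bl (A.ix c'). (c',d) \<in> fst x" using hyp c'f c'c c'ne c'(2) ix'c' by simp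
  moreover have bs: "A.ix c' \<in> Field s" using A.F1(1)[OF c'f] .
  moreover have "c' \<in> A.bl (A.ix c')" using A.in_bl[OF c'f] .
  ultimately have eq: "A.bl (A.ix c') = B.bl b'" using block_eq[OF bs b's _ c'(1) _ c'(2)] by blast
  then have "c \<in> A.bl (A.ix c')" using cB by simp
  then have "A.ix c = A.ix c'" using A.ix_bl by simp
  then have "(c,c') \<in> fst x" using c1 eq c'(1) by simp
  then show False using WO_antisym[OF A.wox c'c] c'ne by simp
qed

lemma final_h:
  assumes Ceq: "\<forall>c\<in>fld x. (\<forall>d\<in>A.bl (A.ix c). (c,d) \<in> fst x) \<longleftrightarrow> (\<forall>d\<in>B.bl (B.ix c). (c,d) \<in> fst x)"
  shows "\<exists>h. bij_betw h (Field s) (Field s') \<and> (\<forall>b\<in>Field s. \<forall>c\<in>Field s. (b, c) \<in> s \<longleftrightarrow> (h b, h c) \<in> s')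
           \<and> (\<forall>b\<in>Field s. weq (u b) (u' (h b)))"
proof -
  define m where "m b = (SOME c. c \<in> A.bl b \<and> (\<forall>d\<in>A.bl b. (c,d) \<in> fst x))" for b
  have mb: "\<And>b. b \<in> Field s \<Longrightarrow> m b \<in> A.bl b \<and> (\<forall>d\<in>A.bl b. (m b,d) \<in> fst x)"
  proof -
    fix b assume b: "b \<in> Field s"
    show "m b \<in> A.bl b \<and> (\<forall>d\<in>A.bl b. (m b,d) \<in> fst x)"
      unfolding m_def using A.bl_min_ex[OF b] by (rule someI2_bex) blast
  qed
  define h where "h b = B.ix (m b)" for b
  have blh: "\<And>b. b \<in> Field s \<Longrightarrow> A.bl b = B.bl (h b) \<and> h b \<in> Field s'"
  proof -
    fix b assume b: "b \<in> Field s"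
    have mf: "m b \<in> fld x" using A.fld_bl mb[OF b] by blast
    have ix: "A.ix (m b) = b" using A.ix_bl mb[OF b] by blast
    have "\<forall>d\<in>B.bl (B.ix (m b)). (m b,d) \<in> fst x" using Ceq mf mb[OF b] ix by auto
    then have m2: "\<forall>d\<in>B.bl (h b). (m b,d) \<in> fst x" using h_def by simp
    have hs: "h b \<in> Field s'" using B.F1(1)[OF mf] h_def by simp
    have mB: "m b \<in> B.bl (h b)" using B.in_bl[OF mf] h_def by simp
    have m1: "m b \<in> A.bl b" "\<forall>d\<in>A.bl b. (m b,d) \<in> fst x" using mb[OF b] by auto
    have "A.bl b = B.bl (h b)" using block_eq[OF b hs m1(1) mB m1(2) m2] .
    then show "A.bl b = B.bl (h b) \<and> h b \<in> Field s'" using hs by blast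
  qed
  have inj: "inj_on h (Field s)"
  proof (rule inj_onI)
    fix b1 b2 assume b: "b1 \<in> Field s" "b2 \<in> Field s" "h b1 = h b2"
    then have "A.bl b1 = A.bl b2" using blh by metis
    moreover obtain d where "d \<in> A.bl b1" using A.F5[OF b(1)] by blast
    ultimately show "b1 = b2" using A.bl_disj by blast
  qed
  have surj: "h ` Field s = Field s'"
  proof
    show "h ` Field s \<subseteq> Field s'" using blh by blast
  next
    show "Field s' \<subseteq> h ` Field s"
    proof
      fix b' assume b': "b' \<in> Field s'"
      obtain c where c: "c \<in> B.bl b'" "\<forall>d\<in>B.bl b'. (c,d) \<in> fst x" using B.bl_min_ex[OF b'] by blast
      have cf: "c \<in> fld x" using B.fld_bl[OF c(1)] .
      have "\<forall>d\<in>A.bl (A.ix c). (c,d) \<in> fst x" using Ceq cf c B.ix_bl by auto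
      moreover have bs: "A.ix c \<in> Field s" using A.F1(1)[OF cf] .
      ultimately have eq: "A.bl (A.ix c) = B.bl b'" using block_eq[OF bs b'] A.in_bl[OF cf] c by blast
      have "B.bl (h (A.ix c)) = B.bl b'" using blh[OF bs] eq by simp
      then have "h (A.ix c) = b'" using c(1) B.bl_disj by blast
      then show "b' \<in> h ` Field s" using bs by blast
    qed
  qed
  have ord: "\<forall>b\<in>Field s. \<forall>c\<in>Field s. (b, c) \<in> s \<longleftrightarrow> (h b, h c) \<in> s'"
  proof (intro ballI)
    fix b c assume b: "b \<in> Field s" and c: "c \<in> Field s"
    show "(b, c) \<in> s \<longleftrightarrow> (h b, h c) \<in> s'"
    proof (cases "b = c")
      case True
      then show ?thesis using WO_refl_pt[OF A.wos b] WO_refl_pt[OF B.wos] blh[OF b] by simp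
    next
      case False
      obtain d where d: "d \<in> A.bl b" using A.F5[OF b] by blast
      obtain e where e: "e \<in> A.bl c" using A.F5[OF c] by blast
      have df: "d \<in> fld x" "e \<in> fld x" using A.fld_bl d e by auto
      have "(b,c) \<in> s \<longleftrightarrow> (d,e) \<in> fst x" using A.O1[OF df] A.ix_bl[OF d] A.ix_bl[OF e] False by simp
      also have "\<dots> \<longleftrightarrow> (B.ix d, B.ix e) \<in> s'"
      proof -
        have "d \<in> B.bl (h b)" "e \<in> B.bl (h c)" using blh[OF b] blh[OF c] d e by auto
        then have ix: "B.ix d = h b" "B.ix e = h c" using B.ix_bl by auto
        have "h b \<noteq> h c" using inj b c False inj_on_def by metis
        then show ?thesis using B.O1[OF df] ix by simp
      qed
      also have "\<dots> \<longleftrightarrow> (h b, h c) \<in> s'"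
      proof -
        have "d \<in> B.bl (h b)" "e \<in> B.bl (h c)" using blh[OF b] blh[OF c] d e by auto
        then show ?thesis using B.ix_bl by auto
      qed
      finally show ?thesis .
    qed
  qed
  have wq: "\<forall>b\<in>Field s. weq (u b) (u' (h b))"
  proof
    fix b assume b: "b \<in> Field s"
    have "weq (u b) (rs x (A.bl b))" using weq_sym[OF A.weq_bl[OF b]] .
    moreover have "weq (rs x (B.bl (h b))) (u' (h b))" using B.weq_bl blh[OF b] by blast
    ultimately show "weq (u b) (u' (h b))" using blh[OF b] weq_trans by metis
  qed
  show ?thesis using inj surj ord wq unfolding bij_betw_def by blast
qed

end


theorem mainTheorem18:
  fixes x :: "(nat, 'a::{finite,linorder}) wd"
    and s s' :: "nat rel" and u u' :: "nat \<Rightarrow> (nat, 'a) wd"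
  assumes "wf_word x"
    and "Well_order s" and "\<forall>b\<in>Field s. prime_word (u b)"
    and "dense_nonincr s u" and "weq x (wprod s u)"
    and "Well_order s'" and "\<forall>b\<in>Field s'. prime_word (u' b)"
    and "dense_nonincr s' u'" and "weq x (wprod s' u')"
  shows "\<exists>h. bij_betw h (Field s) (Field s')
           \<and> (\<forall>b\<in>Field s. \<forall>c\<in>Field s. (b, c) \<in> s \<longleftrightarrow> (h b, h c) \<in> s')
           \<and> (\<forall>b\<in>Field s. weq (u b) (u' (h b)))"
proof -
  obtain ph where ph: "isom x (wprod s u) ph" using assms(5) weq_isom by blast
  obtain ph' where ph': "isom x (wprod s' u') ph'" using assms(9) weq_isom by blast
  have FA: "fact x s u ph" by (rule fact.intro) (use assms ph in auto)
  have FB: "fact x s' u' ph'" by (rule fact.intro) (use assms ph' in auto)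
  interpret AB: two x s u ph s' u' ph' unfolding two_def using FA FB by blast
  interpret BA: two x s' u' ph' s u ph unfolding two_def using FA FB by blast
  define C1 where "C1 c = (\<forall>d\<in>AB.A.bl (AB.A.ix c). (c,d) \<in> fst x)" for c
  define C2 where "C2 c = (\<forall>d\<in>AB.B.bl (AB.B.ix c). (c,d) \<in> fst x)" for c
  have Ceq: "\<forall>c\<in>fld x. C1 c \<longleftrightarrow> C2 c"
  proof (rule ccontr)
    assume "\<not> (\<forall>c\<in>fld x. C1 c \<longleftrightarrow> C2 c)"
    then have ne: "{c \<in> fld x. \<not> (C1 c \<longleftrightarrow> C2 c)} \<noteq> {}" by blast
    have sub: "{c \<in> fld x. \<not> (C1 c \<longleftrightarrow> C2 c)} \<subseteq> fld x" by blast
    obtain c where c: "c \<in> {c \<in> fld x. \<not> (C1 c \<longleftrightarrow> C2 c)}"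
      "\<forall>c'\<in>{c \<in> fld x. \<not> (C1 c \<longleftrightarrow> C2 c)}. (c,c') \<in> fst x"
      using wo_min[OF AB.A.wox sub ne] by blast
    have cf: "c \<in> fld x" using c(1) by blast
    have hyp: "\<forall>c'\<in>fld x. (c',c) \<in> fst x \<and> c' \<noteq> c \<longrightarrow> (C1 c' \<longleftrightarrow> C2 c')"
    proof (intro ballI impI)
      fix c' assume c'f: "c' \<in> fld x" and cc: "(c',c) \<in> fst x \<and> c' \<noteq> c"
      show "C1 c' \<longleftrightarrow> C2 c'"
      proof (rule ccontr)
        assume "\<not> (C1 c' \<longleftrightarrow> C2 c')"
        then have "(c,c') \<in> fst x" using c(2) c'f by blast
        then show False using WO_antisym[OF AB.A.wox] cc by blast
      qed
    qed
    show False
    proof (cases "C1 c")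
      case True
      have "C2 c" using AB.cut_sub[OF cf] True hyp unfolding C1_def C2_def by blast
      then show False using c(1) True by blast
    next
      case False
      then have c2: "C2 c" using c(1) by blast
      have hyp': "\<forall>c'\<in>fld x. (c',c) \<in> fst x \<and> c' \<noteq> c \<longrightarrow> (C2 c' \<longleftrightarrow> C1 c')" using hyp by blast
      have "C1 c" using BA.cut_sub[OF cf] c2 hyp' unfolding C1_def C2_def by blast
      then show False using False by blast
    qed
  qed
  show ?thesis using AB.final_h Ceq unfolding C1_def C2_def by blast
qed


end
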